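(* Let $Q$ be an ADE quiver with $n$ vertices and $h_Q$ the Coxeter number of its underlying graph. Then for every $\sigma=(Z,\mathcal{P})\in\mathrm{Stab}_{\mathcal{A}_{\mathrm{can}}}(\mathcal{D}_Q)$, $$\mathrm{vol}(\sigma)=\sum_{i,j=1}^n\chi^{ij}Z(S_i)\overline{Z(S_j)}=\frac{1}{h_Q}\sum_{M\in\Delta^+_Q}|Z(M)|^2,$$ where $(\chi^{ij})$ is the inverse of the matrix $(\chi(S_i,S_j))_{i,j}$. Equivalently, for all $1\le i,j\le n$, $\chi^{ij}=\frac{1}{h_Q}\sum_{M\in\Delta^+_Q}c_i(M)c_j(M)$, where $c_i(M)\in\mathbb{Z}_{\ge0}$ is the coefficient of $[S_i]$ in $M$.
   Context: Let $\mathbb{K}$ be a field and $Q$ a quiver whose underlying graph is a Dynkin graph of type A, D or E, with vertices $1,\dots,n$ and arrow set $Q_1$. The 2-Calabi–Yau Ginzburg dg algebra $\Gamma_Q$ is the graded path algebra of the quiver with arrows $a\in Q_1$ (degree $0$), opposite arrows $a^*:j\to i$ for $a:i\to j$ (degree $0$) and loops $t_i$ (degree $-1$), with differential $da=da^*=0$, $dt_i=\sum_{a\in Q_1}e_i(aa^*-a^*a)e_i$. $\mathcal{D}_Q$ is the triangulated category of dg $\Gamma_Q$-modules with finite-dimensional total cohomology (a full subcategory of the derived category). $S_1,\dots,S_n$ are the simple modules at the vertices; $K(\mathcal{D}_Q)\cong\mathbb{Z}^n$ with basis $[S_i]$, and the Euler form $\chi(E,F)=\sum_i(-1)^i\dim\mathrm{Hom}(E,F[i])$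 has matrix $(\chi(S_i,S_j))$ equal to the Cartan matrix of the Dynkin graph. $\Delta^+_Q\subset K(\mathcal{D}_Q)$ denotes the set of elements corresponding to the positive roots of the Dynkin graph under the identification of $[S_1],\dots,[S_n]$ with the simple roots. Coxeter numbers: $h_{A_n}=n+1$, $h_{D_n}=2(n-1)$, $h_{E_6}=12$, $h_{E_7}=18$, $h_{E_8}=30$. A stability condition $\sigma=(Z,\mathcal{P})$ consists of a central charge $Z:K(\mathcal{D}_Q)\to\mathbb{C}$ and slicing $\mathcal{P}$ satisfying Bridgeland's axioms; its heart is $\mathcal{P}(0,1]$. $\mathcal{A}_{\mathrm{can}}$ is the heart of the standard t-structure (aisle: $H^i(M)=0$ for $i>0$), with simple objects $S_1,\dots,S_n$; $\mathrm{Stab}_{\mathcal{A}_{\mathrm{can}}}(\mathcal{D}_Q)$ is the set of stability conditions with heart $\mathcal{A}_{\mathrm{can}}$ (for these $Z(S_i)\in\{re^{i\pi\phi}:r>0,\phi\in(0,1]\}$). The categorical volume is $\mathrm{vol}(\sigma)=\left|\sum_{i,j}\chi^{ij}Z(E_i)\overline{Z(E_j)}\right|$ for any basis $E_1,\dots,E_n$ of $K(\mathcal{D}_Q)$, with $(\chi^{ij})$ the inverse of $(\chi(E_i,E_j))$. *)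

theory Defs
  imports "HOL-Analysis.Analysis"
begin

datatype dynkin_type = Type_A nat | Type_D nat | Type_E nat

fun dynkin_valid :: "dynkin_type \<Rightarrow> bool" where
  "dynkin_valid (Type_A m) = (m \<ge> 1)"
| "dynkin_valid (Type_D m) = (m \<ge> 4)"
| "dynkin_valid (Type_E m) = (m \<in> {6, 7, 8})"

fun dynkin_rank :: "dynkin_type \<Rightarrow> nat" where
  "dynkin_rank (Type_A m) = m"
| "dynkin_rank (Type_D m) = m"
| "dynkin_rank (Type_E m) = m"

fun coxeter_number :: "dynkin_type \<Rightarrow> nat" where
  "coxeter_number (Type_A m) = m + 1"
| "coxeter_number (Type_D m) = 2 * (m - 1)"
| "coxeter_number (Type_E m) = (if m = 6 then 12 else if m = 7 then 18 else 30)"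

fun std_edge_dir :: "dynkin_type \<Rightarrow> nat \<Rightarrow> nat \<Rightarrow> bool" where
  "std_edge_dir (Type_A m) a b = (b = a + 1 \<and> b < m)"
| "std_edge_dir (Type_D m) a b = ((b = a + 1 \<and> b < m - 1) \<or> (a = m - 3 \<and> b = m - 1))"
| "std_edge_dir (Type_E m) a b = ((b = a + 1 \<and> b < m - 1) \<or> (a = 2 \<and> b = m - 1))"

definition std_edge :: "dynkin_type \<Rightarrow> nat \<Rightarrow> nat \<Rightarrow> bool" where
  "std_edge T a b \<longleftrightarrow> std_edge_dir T a b \<or> std_edge_dir T b a"

text \<open>A quiver with vertex set the finite type 'n and arrow set Q1 (an arrow i \<rightarrow> j
  is the pair (i,j)); since the underlying graph is Dynkin, there are no loops or
  multiple edges, so a set of pairs suffices.\<close>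

definition adjacent :: "('n \<times> 'n) set \<Rightarrow> 'n \<Rightarrow> 'n \<Rightarrow> bool" where
  "adjacent Q1 i j \<longleftrightarrow> (i, j) \<in> Q1 \<or> (j, i) \<in> Q1"

definition dynkin_quiver :: "dynkin_type \<Rightarrow> ('n::finite \<times> 'n) set \<Rightarrow> bool" where
  "dynkin_quiver T Q1 \<longleftrightarrow>
     dynkin_valid T \<and>
     (\<forall>i. (i, i) \<notin> Q1) \<and>
     (\<forall>i j. (i, j) \<in> Q1 \<longrightarrow> (j, i) \<notin> Q1) \<and>
     (\<exists>f. bij_betw f (UNIV :: 'n set) {0..<dynkin_rank T} \<and>
          (\<forall>i j. adjacent Q1 i j \<longleftrightarrow> std_edge T (f i) (f j)))"

definition euler_form :: "('n \<times> 'n) set \<Rightarrow> 'n \<Rightarrow> 'n \<Rightarrow> int" where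
  "euler_form Q1 i j = (if i = j then 2 else if adjacent Q1 i j then -1 else 0)"

definition euler_matrix :: "('n::finite \<times> 'n) set \<Rightarrow> real^'n^'n" where
  "euler_matrix Q1 = (\<chi> i j. real_of_int (euler_form Q1 i j))"

definition chi_inv :: "('n::finite \<times> 'n) set \<Rightarrow> 'n \<Rightarrow> 'n \<Rightarrow> real" where
  "chi_inv Q1 i j = matrix_inv (euler_matrix Q1) $ i $ j"

section \<open>Positive roots in K(D_Q) = Z^n (coordinates w.r.t. [S_1],...,[S_n])\<close>

definition simple_root :: "'n::finite \<Rightarrow> int^'n" where
  "simple_root i = (\<chi> k. if k = i then 1 else 0)"

definition simple_reflection :: "('n::finite \<times> 'n) set \<Rightarrow> 'n \<Rightarrow> int^'n \<Rightarrow> int^'n" where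
  "simple_reflection Q1 i v =
     (\<chi> k. if k = i then v $ k - (\<Sum>j\<in>UNIV. euler_form Q1 i j * v $ j) else v $ k)"

inductive_set roots :: "('n::finite \<times> 'n) set \<Rightarrow> (int^'n) set" for Q1 where
  simple: "simple_root i \<in> roots Q1"
| reflect: "v \<in> roots Q1 \<Longrightarrow> simple_reflection Q1 i v \<in> roots Q1"

definition positive_roots :: "('n::finite \<times> 'n) set \<Rightarrow> (int^'n) set" where
  "positive_roots Q1 = {v \<in> roots Q1. \<forall>k. v $ k \<ge> 0}"

text \<open>Z(S_i) must lie in {r e^{i pi phi} : r > 0, phi in (0,1]}.\<close>
definition semi_closed_upper_half_plane :: "complex set" where
  "semi_closed_upper_half_plane =
     {complex_of_real r * exp (\<i> * complex_of_real (pi * \<phi>)) | r \<phi>. r > 0 \<and> 0 < \<phi> \<and> \<phi> \<le> 1}"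

definition central_charge :: "('n::finite \<Rightarrow> complex) \<Rightarrow> int^'n \<Rightarrow> complex" where
  "central_charge z v = (\<Sum>i\<in>UNIV. of_int (v $ i) * z i)"

definition cat_volume :: "('n::finite \<times> 'n) set \<Rightarrow> ('n \<Rightarrow> complex) \<Rightarrow> real" where
  "cat_volume Q1 z = cmod (\<Sum>i\<in>UNIV. \<Sum>j\<in>UNIV. complex_of_real (chi_inv Q1 i j) * z i * cnj (z j))"

end

theory Submission
  imports Defs
begin

definition ax :: "('n::finite \<times> 'n) set \<Rightarrow> 'n \<Rightarrow> int^'n \<Rightarrow> int" where
  "ax Q1 i v = (\<Sum>j\<in>UNIV. euler_form Q1 i j * v$j)"

lemma euler_sym: "euler_form Q1 i j = euler_form Q1 j i"
  by (auto simp: euler_form_def adjacent_def)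

lemma euler_diag[simp]: "euler_form Q1 i i = 2"
  by (simp add: euler_form_def)

lemma sr_nth: "simple_reflection Q1 i v $ k = (if k = i then v$k - ax Q1 i v else v$k)"
  by (simp add: simple_reflection_def ax_def)

lemma ax_simple: "ax Q1 i (simple_root k) = euler_form Q1 i k"
  by (simp add: ax_def simple_root_def if_distrib cong: if_cong)

lemma sum_if_sub:
  fixes u :: "'n::finite \<Rightarrow> int"
  shows "(\<Sum>k\<in>UNIV. (if k = i then u k - a else u k) * X k) = (\<Sum>k\<in>UNIV. u k * X k) - a * X i"
proof -
  have "(\<Sum>k\<in>UNIV. (if k = i then u k - a else u k) * X k) = (\<Sum>k\<in>UNIV. u k * X k - (if k = i then a * X k else 0))"
    by (rule sum.cong) (auto simp: algebra_simps)
  also have "\<dots> = (\<Sum>k\<in>UNIV. u k * X k) - a * X i"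
    by (simp add: sum_subtractf)
  finally show ?thesis .
qed

lemma ax_sr: "ax Q1 j (simple_reflection Q1 i v) = ax Q1 j v - ax Q1 i v * euler_form Q1 j i"
proof -
  have "ax Q1 j (simple_reflection Q1 i v) = (\<Sum>k\<in>UNIV. (if k = i then v$k - ax Q1 i v else v$k) * euler_form Q1 j k)"
    unfolding ax_def sr_nth by (simp add: mult.commute)
  also have "\<dots> = ax Q1 j v - ax Q1 i v * euler_form Q1 j i"
    by (subst sum_if_sub) (simp add: ax_def mult.commute)
  finally show ?thesis .
qed

lemma sr_sr[simp]: "simple_reflection Q1 i (simple_reflection Q1 i v) = v"
  by (simp add: vec_eq_iff sr_nth ax_sr)

lemma ax_neg: "ax Q1 i (-v) = - ax Q1 i v"
  by (simp add: ax_def sum_negf)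

lemma sr_neg: "simple_reflection Q1 i (-v) = - simple_reflection Q1 i v"
  by (simp add: vec_eq_iff sr_nth ax_neg)

lemma sr_simple: "simple_reflection Q1 i (simple_root i) = - simple_root i"
  by (simp add: vec_eq_iff sr_nth ax_simple) (simp add: simple_root_def)

lemma roots_neg: "v \<in> roots Q1 \<Longrightarrow> - v \<in> roots Q1"
proof (induction rule: roots.induct)
  case (simple i)
  then show ?case using roots.reflect[OF roots.simple[of i Q1], of i] by (simp add: sr_simple)
next
  case (reflect v i)
  then show ?case using roots.reflect[OF reflect.IH, of i] by (simp add: sr_neg)
qed

lemma simple_root_sum:
  fixes X :: "'n::finite \<Rightarrow> int"
  shows "(\<Sum>k\<in>UNIV. simple_root i $ k * X k) = X i"
proof -
  have "(\<Sum>k\<in>UNIV. simple_root i $ k * X k) = (\<Sum>k\<in>UNIV. if k = i then X k else 0)"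
    by (rule sum.cong) (auto simp: simple_root_def)
  then show ?thesis by simp
qed

definition fm :: "('n::finite \<times> 'n) set \<Rightarrow> int^'n \<Rightarrow> int^'n \<Rightarrow> int" where
  "fm Q1 u v = (\<Sum>i\<in>UNIV. u$i * ax Q1 i v)"

lemma fm_sr: "fm Q1 (simple_reflection Q1 i u) (simple_reflection Q1 i v) = fm Q1 u v"
proof -
  let ?a = "ax Q1 i u" and ?b = "ax Q1 i v"
  have s1: "(\<Sum>k\<in>UNIV. simple_reflection Q1 i u $ k * euler_form Q1 k i) = - ?a"
  proof -
    have "(\<Sum>k\<in>UNIV. simple_reflection Q1 i u $ k * euler_form Q1 k i) = ax Q1 i (simple_reflection Q1 i u)"
      by (simp add: ax_def euler_sym mult.commute)
    then show ?thesis by (simp add: ax_sr)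
  qed
  have "fm Q1 (simple_reflection Q1 i u) (simple_reflection Q1 i v)
      = (\<Sum>k\<in>UNIV. simple_reflection Q1 i u $ k * ax Q1 k v) - ?b * (\<Sum>k\<in>UNIV. simple_reflection Q1 i u $ k * euler_form Q1 k i)"
    unfolding fm_def ax_sr by (simp add: algebra_simps sum_subtractf sum_distrib_left)
  also have "(\<Sum>k\<in>UNIV. simple_reflection Q1 i u $ k * ax Q1 k v) = fm Q1 u v - ?a * ?b"
    unfolding sr_nth fm_def by (subst sum_if_sub) simp
  finally show ?thesis using s1 by simp
qed

lemma roots_norm: "v \<in> roots Q1 \<Longrightarrow> fm Q1 v v = 2"
proof (induction rule: roots.induct)
  case (simple i)
  then show ?case by (simp add: fm_def ax_simple simple_root_sum)
next
  case (reflect v i)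
  then show ?case by (simp add: fm_sr)
qed

definition Kf :: "('n::finite \<times> 'n) set \<Rightarrow> 'n \<Rightarrow> 'n \<Rightarrow> int" where
  "Kf Q1 j l = (\<Sum>\<alpha>\<in>roots Q1. \<alpha>$j * ax Q1 l \<alpha>)"

lemma sr_bij: "bij_betw (simple_reflection Q1 k) (roots Q1) (roots Q1)"
  by (rule bij_betw_byWitness[where f'="simple_reflection Q1 k"]) (auto intro: roots.reflect)

lemma sum_roots_sr:
  "(\<Sum>\<alpha>\<in>roots Q1. g \<alpha>) = (\<Sum>\<alpha>\<in>roots Q1. g (simple_reflection Q1 k \<alpha>))"
  using sum.reindex_bij_betw[OF sr_bij[of Q1 k], of g] by simp

lemma K_off:
  assumes "j \<noteq> k"
  shows "Kf Q1 j k = 0"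
proof -
  have "Kf Q1 j k = (\<Sum>\<alpha>\<in>roots Q1. simple_reflection Q1 k \<alpha> $ j * ax Q1 k (simple_reflection Q1 k \<alpha>))"
    unfolding Kf_def by (rule sum_roots_sr)
  also have "\<dots> = (\<Sum>\<alpha>\<in>roots Q1. - (\<alpha>$j * ax Q1 k \<alpha>))"
    using assms by (intro sum.cong) (auto simp: sr_nth ax_sr)
  also have "\<dots> = - Kf Q1 j k" by (simp add: Kf_def sum_negf)
  finally show ?thesis by simp
qed

definition Mf :: "('n::finite \<times> 'n) set \<Rightarrow> 'n \<Rightarrow> 'n \<Rightarrow> int" where
  "Mf Q1 k l = (\<Sum>\<alpha>\<in>roots Q1. ax Q1 k \<alpha> * ax Q1 l \<alpha>)"

lemma K_adj:
  assumes "euler_form Q1 k l = -1"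
  shows "Kf Q1 l l = - Mf Q1 l k"
proof -
  define N where "N = (\<Sum>\<alpha>\<in>roots Q1. ax Q1 l \<alpha> * ax Q1 l \<alpha>)"
  have kl: "k \<noteq> l" using assms by auto
  have e: "euler_form Q1 k l = -1" "euler_form Q1 l k = -1" using assms euler_sym[of Q1 k l] by auto
  have "Kf Q1 l l = (\<Sum>\<alpha>\<in>roots Q1. simple_reflection Q1 l \<alpha> $ l * ax Q1 l (simple_reflection Q1 l \<alpha>))"
    unfolding Kf_def by (rule sum_roots_sr)
  also have "\<dots> = (\<Sum>\<alpha>\<in>roots Q1. ax Q1 l \<alpha> * ax Q1 l \<alpha> - \<alpha>$l * ax Q1 l \<alpha>)"
    by (intro sum.cong) (auto simp: sr_nth ax_sr algebra_simps)
  also have "\<dots> = N - Kf Q1 l l" by (simp add: N_def Kf_def sum_subtractf)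
  finally have 1: "2 * Kf Q1 l l = N" by simp
  have "Kf Q1 l k = (\<Sum>\<alpha>\<in>roots Q1. simple_reflection Q1 l \<alpha> $ l * ax Q1 k (simple_reflection Q1 l \<alpha>))"
    unfolding Kf_def by (rule sum_roots_sr)
  also have "\<dots> = (\<Sum>\<alpha>\<in>roots Q1. (\<alpha>$l * ax Q1 k \<alpha> + \<alpha>$l * ax Q1 l \<alpha>) - (ax Q1 l \<alpha> * ax Q1 k \<alpha> + ax Q1 l \<alpha> * ax Q1 l \<alpha>))"
    using e by (intro sum.cong) (auto simp: sr_nth ax_sr algebra_simps)
  also have "\<dots> = (Kf Q1 l k + Kf Q1 l l) - (Mf Q1 l k + N)"
    by (simp add: N_def Kf_def Mf_def sum_subtractf sum.distrib)
  finally show ?thesis using 1 by simp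
qed

lemma Mf_sym: "Mf Q1 k l = Mf Q1 l k"
  by (simp add: Mf_def mult.commute)

lemma K_adj_eq:
  assumes "adjacent Q1 k l" "k \<noteq> l"
  shows "Kf Q1 k k = Kf Q1 l l"
proof -
  have "euler_form Q1 k l = -1" "euler_form Q1 l k = -1"
    using assms by (auto simp: euler_form_def adjacent_def)
  from K_adj[OF this(1)] K_adj[OF this(2)] show ?thesis by (simp add: Mf_sym)
qed

lemma trace_K: "finite (roots Q1) \<Longrightarrow> (\<Sum>k\<in>UNIV. Kf Q1 k k) = 2 * int (card (roots Q1))"
proof -
  assume fin: "finite (roots Q1)"
  have "(\<Sum>k\<in>UNIV. Kf Q1 k k) = (\<Sum>\<alpha>\<in>roots Q1. fm Q1 \<alpha> \<alpha>)"
    unfolding Kf_def fm_def by (rule sum.swap)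
  also have "\<dots> = (\<Sum>\<alpha>\<in>roots Q1. 2)" by (rule sum.cong) (auto simp: roots_norm)
  finally show ?thesis by simp
qed

lemma zero_not_root: "0 \<notin> roots Q1"
proof
  assume "0 \<in> roots Q1"
  then have "fm Q1 0 0 = 2" by (rule roots_norm)
  then show False by (simp add: fm_def)
qed

lemma roots_split:
  assumes sign: "\<forall>v\<in>roots Q1. (\<forall>k. 0 \<le> v$k) \<or> (\<forall>k. v$k \<le> 0)"
  shows "roots Q1 = positive_roots Q1 \<union> uminus ` positive_roots Q1"
    and "positive_roots Q1 \<inter> uminus ` positive_roots Q1 = {}"
proof -
  show "roots Q1 = positive_roots Q1 \<union> uminus ` positive_roots Q1"
  proof (intro equalityI subsetI)
    fix v assume v: "v \<in> roots Q1"
    show "v \<in> positive_roots Q1 \<union> uminus ` positive_roots Q1"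
    proof (cases "\<forall>k. 0 \<le> v$k")
      case True then show ?thesis using v by (auto simp: positive_roots_def)
    next
      case False
      then have "\<forall>k. v$k \<le> 0" using sign v by auto
      then have "-v \<in> positive_roots Q1" using roots_neg[OF v] by (auto simp: positive_roots_def)
      then have "- (-v) \<in> uminus ` positive_roots Q1" by blast
      then show ?thesis by simp
    qed
  next
    fix v assume "v \<in> positive_roots Q1 \<union> uminus ` positive_roots Q1"
    then show "v \<in> roots Q1" by (auto simp: positive_roots_def intro: roots_neg)
  qed
  show "positive_roots Q1 \<inter> uminus ` positive_roots Q1 = {}"
  proof (rule ccontr)
    assume "positive_roots Q1 \<inter> uminus ` positive_roots Q1 \<noteq> {}"
    then obtain v w where v: "v \<in> positive_roots Q1" and w: "w \<in> positive_roots Q1" and vw: "v = - w" by auto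
    have "v = 0"
    proof (subst vec_eq_iff, intro allI)
      fix k
      have "0 \<le> v$k" "0 \<le> w$k" using v w by (auto simp: positive_roots_def)
      then show "v$k = 0$k" using vw by simp
    qed
    then show False using v zero_not_root by (auto simp: positive_roots_def)
  qed
qed

lemma sum_roots_even:
  assumes sign: "\<forall>v\<in>roots Q1. (\<forall>k. 0 \<le> v$k) \<or> (\<forall>k. v$k \<le> 0)"
    and fin: "finite (positive_roots Q1)"
    and ev: "\<And>v. g (-v) = (g v :: 'b::comm_semiring_1)"
  shows "(\<Sum>\<alpha>\<in>roots Q1. g \<alpha>) = 2 * (\<Sum>\<alpha>\<in>positive_roots Q1. g \<alpha>)"
proof -
  have "(\<Sum>\<alpha>\<in>roots Q1. g \<alpha>) = (\<Sum>\<alpha>\<in>positive_roots Q1. g \<alpha>) + (\<Sum>\<alpha>\<in>uminus ` positive_roots Q1. g \<alpha>)"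
    unfolding roots_split(1)[OF sign] by (rule sum.union_disjoint) (use fin roots_split(2)[OF sign] in auto)
  also have "(\<Sum>\<alpha>\<in>uminus ` positive_roots Q1. g \<alpha>) = (\<Sum>\<alpha>\<in>positive_roots Q1. g \<alpha>)"
    by (subst sum.reindex) (auto simp: inj_on_def ev)
  finally show ?thesis by (simp add: mult_2)
qed

lemma main_identity:
  fixes Q1 :: "('n::finite \<times> 'n) set" and h :: nat
  assumes sign: "\<forall>v\<in>roots Q1. (\<forall>k. 0 \<le> v$k) \<or> (\<forall>k. v$k \<le> 0)"
    and fin: "finite (positive_roots Q1)"
    and conn: "\<And>(c :: 'n \<Rightarrow> int) k l. (\<forall>k l. adjacent Q1 k l \<longrightarrow> c k = c l) \<Longrightarrow> c k = c l"
    and card: "2 * card (positive_roots Q1) = CARD('n) * h"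
  shows "(\<Sum>M\<in>positive_roots Q1. M$j * ax Q1 l M) = (if j = l then int h else 0)"
proof -
  have finr: "finite (roots Q1)" using roots_split(1)[OF sign] fin by simp
  have K2: "Kf Q1 j l = 2 * (\<Sum>M\<in>positive_roots Q1. M$j * ax Q1 l M)" for j l
    unfolding Kf_def by (rule sum_roots_even[OF sign fin]) (simp add: ax_neg)
  have cardr: "card (roots Q1) = 2 * card (positive_roots Q1)"
    using sum_roots_even[OF sign fin, of "\<lambda>_. 1::nat"] by simp
  have adj: "\<forall>k l. adjacent Q1 k l \<longrightarrow> Kf Q1 k k = Kf Q1 l l"
  proof (intro allI impI)
    fix k l assume "adjacent Q1 k l"
    then show "Kf Q1 k k = Kf Q1 l l" using K_adj_eq by (cases "k = l") blast+
  qed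
  have eq: "Kf Q1 k k = Kf Q1 l l" for k l
    using conn[of "\<lambda>k. Kf Q1 k k" k l] adj by simp
  obtain a :: 'n where True by simp
  have "(\<Sum>k\<in>UNIV. Kf Q1 k k) = of_nat CARD('n) * Kf Q1 a a"
  proof -
    have "(\<Sum>k\<in>UNIV. Kf Q1 k k) = (\<Sum>k\<in>(UNIV::'n set). Kf Q1 a a)"
      using eq[of _ a] by (intro sum.cong) auto
    then show ?thesis by simp
  qed
  with trace_K[OF finr] cardr card have "of_nat CARD('n) * Kf Q1 a a = 2 * of_nat CARD('n) * int h"
    by simp
  then have c: "Kf Q1 a a = 2 * int h" by simp
  show ?thesis
  proof (cases "j = l")
    case True
    then show ?thesis using K2[of l l] eq[of l a] c by simp
  next
    case False
    then show ?thesis using K2[of j l] K_off[OF False, of Q1] by simp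
  qed
qed

lemma final_from_facts:
  fixes Q1 :: "('n::finite \<times> 'n) set" and h :: nat and z :: "'n \<Rightarrow> complex"
  assumes sign: "\<forall>v\<in>roots Q1. (\<forall>k. 0 \<le> v$k) \<or> (\<forall>k. v$k \<le> 0)"
    and fin: "finite (positive_roots Q1)"
    and conn: "\<And>(c :: 'n \<Rightarrow> int) k l. (\<forall>k l. adjacent Q1 k l \<longrightarrow> c k = c l) \<Longrightarrow> c k = c l"
    and card: "2 * card (positive_roots Q1) = CARD('n) * h"
    and hpos: "h > 0"
  shows "complex_of_real (cat_volume Q1 z)
           = (\<Sum>i\<in>UNIV. \<Sum>j\<in>UNIV. complex_of_real (chi_inv Q1 i j) * z i * cnj (z j))
       \<and> (\<Sum>i\<in>UNIV. \<Sum>j\<in>UNIV. complex_of_real (chi_inv Q1 i j) * z i * cnj (z j))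
           = complex_of_real (1 / real h *
               (\<Sum>M\<in>positive_roots Q1. (cmod (central_charge z M))\<^sup>2))
       \<and> (\<forall>i j. chi_inv Q1 i j = 1 / real h *
               (\<Sum>M\<in>positive_roots Q1. real_of_int (M $ i) * real_of_int (M $ j)))"
proof -
  let ?P = "positive_roots Q1"
  define P :: "real^'n^'n" where "P = (\<chi> i j. \<Sum>M\<in>?P. real_of_int (M $ i) * real_of_int (M $ j))"
  define C where "C = euler_matrix Q1"
  define B where "B = (1 / real h) *\<^sub>R P"
  have MI: "(\<Sum>M\<in>?P. M$j * ax Q1 l M) = (if j = l then int h else 0)" for j l
    by (rule main_identity[OF sign fin conn card])
  have PC: "(P ** C) $ j $ l = (if j = l then real h else 0)" for j l
  proof -
    have "(P ** C) $ j $ l = (\<Sum>i\<in>UNIV. (\<Sum>M\<in>?P. real_of_int (M $ j) * real_of_int (M $ i)) * real_of_int (euler_form Q1 i l))"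
      by (simp add: P_def C_def euler_matrix_def matrix_matrix_mult_def)
    also have "\<dots> = (\<Sum>M\<in>?P. real_of_int (M$j * ax Q1 l M))"
      by (simp add: ax_def sum_distrib_left sum_distrib_right euler_sym[of Q1 l] algebra_simps sum.swap[of _ UNIV])
    also have "\<dots> = real_of_int (\<Sum>M\<in>?P. M$j * ax Q1 l M)" by simp
    finally show ?thesis using MI by simp
  qed
  have BC: "B ** C = mat 1"
  proof -
    have "(B ** C) $ j $ l = (1 / real h) * (P ** C) $ j $ l" for j l
      by (simp add: B_def matrix_matrix_mult_def sum_distrib_left mult.assoc)
    then show ?thesis using hpos by (simp add: vec_eq_iff PC mat_def)
  qed
  have CB: "C ** B = mat 1" using BC matrix_left_right_inverse by blast
  have inv: "matrix_inv C = B"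
  proof -
    have ex: "\<exists>A'. C ** A' = mat 1 \<and> A' ** C = mat 1" using BC CB by blast
    then have "C ** matrix_inv C = mat 1 \<and> matrix_inv C ** C = mat 1"
      unfolding matrix_inv_def by (rule someI_ex)
    then have "matrix_inv C = (B ** C) ** matrix_inv C" using BC by simp
    also have "\<dots> = B ** (C ** matrix_inv C)" by (simp add: matrix_mul_assoc)
    also have "\<dots> = B" using \<open>C ** matrix_inv C = mat 1 \<and> _\<close> by simp
    finally show ?thesis .
  qed
  have chi: "chi_inv Q1 i j = 1 / real h * (\<Sum>M\<in>?P. real_of_int (M $ i) * real_of_int (M $ j))" for i j
    by (simp add: chi_inv_def inv[unfolded C_def] B_def P_def)
  define S where "S = (\<Sum>i\<in>UNIV. \<Sum>j\<in>UNIV. complex_of_real (chi_inv Q1 i j) * z i * cnj (z j))"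
  have S: "S = complex_of_real (1 / real h * (\<Sum>M\<in>?P. (cmod (central_charge z M))\<^sup>2))"
  proof -
    define c where "c = complex_of_real (1 / real h)"
    have "S = (\<Sum>i\<in>UNIV. \<Sum>j\<in>UNIV. \<Sum>M\<in>?P. c * ((of_int (M$i) * z i) * cnj (of_int (M$j) * z j)))"
      unfolding S_def chi c_def by (simp add: sum_distrib_left sum_distrib_right mult_ac)
    also have "\<dots> = (\<Sum>i\<in>UNIV. \<Sum>M\<in>?P. \<Sum>j\<in>UNIV. c * ((of_int (M$i) * z i) * cnj (of_int (M$j) * z j)))"
      by (rule sum.cong[OF refl], rule sum.swap)
    also have "\<dots> = (\<Sum>M\<in>?P. \<Sum>i\<in>UNIV. \<Sum>j\<in>UNIV. c * ((of_int (M$i) * z i) * cnj (of_int (M$j) * z j)))"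
      by (rule sum.swap)
    also have "\<dots> = (\<Sum>M\<in>?P. c * (central_charge z M * cnj (central_charge z M)))"
      unfolding central_charge_def cnj_sum sum_product by (simp only: sum_distrib_left)
    also have "\<dots> = c * (\<Sum>M\<in>?P. complex_of_real ((cmod (central_charge z M))\<^sup>2))"
      by (simp only: complex_norm_square sum_distrib_left)
    also have "\<dots> = complex_of_real (1 / real h * (\<Sum>M\<in>?P. (cmod (central_charge z M))\<^sup>2))"
      by (simp add: c_def)
    finally show ?thesis .
  qed
  have nn: "0 \<le> 1 / real h * (\<Sum>M\<in>?P. (cmod (central_charge z M))\<^sup>2)"
    by (intro mult_nonneg_nonneg sum_nonneg) auto
  have vol: "complex_of_real (cat_volume Q1 z) = S"
    unfolding cat_volume_def S_def[symmetric] S by (simp only: norm_of_real abs_of_nonneg[OF nn])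
  show ?thesis using vol S chi unfolding S_def by simp
qed

definition stdE :: "dynkin_type \<Rightarrow> nat \<Rightarrow> nat \<Rightarrow> int" where
  "stdE T a b = (if a = b then 2 else if std_edge T a b then -1 else 0)"

definition srefl :: "dynkin_type \<Rightarrow> nat \<Rightarrow> (nat \<Rightarrow> int) \<Rightarrow> (nat \<Rightarrow> int)" where
  "srefl T k w = w(k := w k - (\<Sum>c\<in>{0..<dynkin_rank T}. stdE T k c * w c))"

definition unit_nat :: "nat \<Rightarrow> nat \<Rightarrow> int" where
  "unit_nat k = (\<lambda>c. if c = k then 1 else 0)"

inductive_set std_roots :: "dynkin_type \<Rightarrow> (nat \<Rightarrow> int) set" for T where
  simple: "k < dynkin_rank T \<Longrightarrow> unit_nat k \<in> std_roots T"
| reflect: "w \<in> std_roots T \<Longrightarrow> k < dynkin_rank T \<Longrightarrow> srefl T k w \<in> std_roots T"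

definition std_pos :: "dynkin_type \<Rightarrow> (nat \<Rightarrow> int) set" where
  "std_pos T = {w \<in> std_roots T. \<forall>c. 0 \<le> w c}"

lemma std_roots_supp: "w \<in> std_roots T \<Longrightarrow> c \<ge> dynkin_rank T \<Longrightarrow> w c = 0"
  by (induction rule: std_roots.induct) (auto simp: unit_nat_def srefl_def)

definition trv :: "('n \<Rightarrow> nat) \<Rightarrow> nat \<Rightarrow> int^'n \<Rightarrow> nat \<Rightarrow> int" where
  "trv f m v = (\<lambda>c. if c < m then v $ (inv_into UNIV f c) else 0)"

definition untr :: "('n::finite \<Rightarrow> nat) \<Rightarrow> (nat \<Rightarrow> int) \<Rightarrow> int^'n" where
  "untr f w = (\<chi> i. w (f i))"

locale dq_setup =
  fixes T :: dynkin_type and Q1 :: "('n::finite \<times> 'n) set" and f :: "'n \<Rightarrow> nat"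
  assumes bij: "bij_betw f UNIV {0..<dynkin_rank T}"
    and adj: "\<And>i j. adjacent Q1 i j \<longleftrightarrow> std_edge T (f i) (f j)"
begin

abbreviation "m \<equiv> dynkin_rank T"
abbreviation "g \<equiv> inv_into UNIV f"

lemma f_lt: "f i < m" using bij by (auto simp: bij_betw_def)
lemma f_inj: "f i = f j \<longleftrightarrow> i = j" using bij by (auto simp: bij_betw_def inj_on_def)
lemma g_f[simp]: "g (f i) = i" using bij by (simp add: bij_betw_def)
lemma f_g: "c < m \<Longrightarrow> f (g c) = c"
  using bij by (metis atLeastLessThan_iff bij_betw_inv_into_right zero_le)

lemma euler_std: "euler_form Q1 i j = stdE T (f i) (f j)"
  by (simp add: euler_form_def stdE_def f_inj adj)

lemma sum_f: "(\<Sum>j\<in>UNIV. F (f j)) = (\<Sum>c\<in>{0..<m}. F c)"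
  using sum.reindex_bij_betw[OF bij, of F] by simp

lemma ax_std: "ax Q1 i v = (\<Sum>c\<in>{0..<m}. stdE T (f i) c * trv f m v c)"
proof -
  have "ax Q1 i v = (\<Sum>j\<in>UNIV. stdE T (f i) (f j) * trv f m v (f j))"
    by (simp add: ax_def euler_std trv_def f_lt)
  then show ?thesis by (simp add: sum_f[where F="\<lambda>c. stdE T (f i) c * trv f m v c"])
qed

lemma trv_sr: "trv f m (simple_reflection Q1 i v) = srefl T (f i) (trv f m v)"
proof (rule ext)
  fix c
  show "trv f m (simple_reflection Q1 i v) c = srefl T (f i) (trv f m v) c"
  proof (cases "c < m")
    case True
    have "g c = i \<longleftrightarrow> c = f i" using True f_g by auto
    then show ?thesis using True by (auto simp: trv_def srefl_def sr_nth ax_std)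
  next
    case False
    then show ?thesis using f_lt[of i] by (auto simp: trv_def srefl_def)
  qed
qed

lemma trv_simple: "trv f m (simple_root i) = unit_nat (f i)"
proof (rule ext)
  fix c
  show "trv f m (simple_root i) c = unit_nat (f i) c"
    using f_g[of c] f_lt[of i] by (auto simp: trv_def unit_nat_def simple_root_def)
qed

lemma roots_to_std: "v \<in> roots Q1 \<Longrightarrow> trv f m v \<in> std_roots T"
proof (induction rule: roots.induct)
  case (simple i) then show ?case by (simp add: trv_simple f_lt std_roots.simple)
next
  case (reflect v i) then show ?case by (simp add: trv_sr f_lt std_roots.reflect)
qed

lemma untr_srefl: "k < m \<Longrightarrow> untr f (srefl T k w) = simple_reflection Q1 (g k) (untr f w)"
proof -
  assume k: "k < m"
  have axe: "ax Q1 (g k) (untr f w) = (\<Sum>c\<in>{0..<m}. stdE T k c * w c)"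
  proof -
    have "ax Q1 (g k) (untr f w) = (\<Sum>j\<in>UNIV. stdE T k (f j) * w (f j))"
      by (simp add: ax_def euler_std untr_def f_g[OF k])
    then show ?thesis by (simp add: sum_f[where F="\<lambda>c. stdE T k c * w c"])
  qed
  show ?thesis
  proof (subst vec_eq_iff, intro allI)
    fix i
    have "f i = k \<longleftrightarrow> i = g k" using f_g[OF k] by auto
    then show "untr f (srefl T k w) $ i = simple_reflection Q1 (g k) (untr f w) $ i"
      using axe by (auto simp: untr_def srefl_def sr_nth)
  qed
qed

lemma untr_unit: "k < m \<Longrightarrow> untr f (unit_nat k) = simple_root (g k)"
proof -
  assume k: "k < m"
  have "f i = k \<longleftrightarrow> i = g k" for i using f_g[OF k] by auto
  then show ?thesis by (simp add: vec_eq_iff untr_def unit_nat_def simple_root_def)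
qed

lemma std_to_roots: "w \<in> std_roots T \<Longrightarrow> untr f w \<in> roots Q1"
proof (induction rule: std_roots.induct)
  case (simple k) then show ?case by (simp add: untr_unit roots.simple)
next
  case (reflect w k) then show ?case by (simp add: untr_srefl roots.reflect)
qed

lemma untr_trv: "untr f (trv f m v) = v"
  by (simp add: vec_eq_iff untr_def trv_def f_lt)

lemma trv_untr: "w \<in> std_roots T \<Longrightarrow> trv f m (untr f w) = w"
  by (rule ext) (auto simp: trv_def untr_def f_g std_roots_supp)

lemma pos_eq: "positive_roots Q1 = untr f ` std_pos T"
proof (intro equalityI subsetI)
  fix v assume v: "v \<in> positive_roots Q1"
  then have "trv f m v \<in> std_roots T" by (simp add: positive_roots_def roots_to_std)
  with v have "trv f m v \<in> std_pos T"
    by (auto simp: positive_roots_def std_pos_def trv_def)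
  then show "v \<in> untr f ` std_pos T" using untr_trv[of v] by force
next
  fix v assume "v \<in> untr f ` std_pos T"
  then obtain w where w: "w \<in> std_pos T" "v = untr f w" by blast
  then have "v \<in> roots Q1" by (simp add: std_pos_def std_to_roots)
  then show "v \<in> positive_roots Q1"
    using w by (auto simp: positive_roots_def std_pos_def untr_def)
qed

lemma inj_untr: "inj_on (untr f) (std_roots T)"
  by (rule inj_onI) (metis trv_untr)

lemma card_n: "CARD('n) = m"
  using bij_betw_same_card[OF bij] by simp

lemma transfer_facts:
  assumes S1: "\<forall>w\<in>std_roots T. (\<forall>c. 0 \<le> w c) \<or> (\<forall>c. w c \<le> 0)"
    and S2: "finite (std_pos T)" "2 * card (std_pos T) = m * coxeter_number T"
    and S3: "\<forall>k. 0 < k \<and> k < m \<longrightarrow> (\<exists>l<k. std_edge T l k)"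
  shows "\<forall>v\<in>roots Q1. (\<forall>k. 0 \<le> v$k) \<or> (\<forall>k. v$k \<le> 0)"
    and "finite (positive_roots Q1)"
    and "\<And>(c :: 'n \<Rightarrow> int) k l. (\<forall>k l. adjacent Q1 k l \<longrightarrow> c k = c l) \<Longrightarrow> c k = c l"
    and "2 * card (positive_roots Q1) = CARD('n) * coxeter_number T"
proof -
  show "\<forall>v\<in>roots Q1. (\<forall>k. 0 \<le> v$k) \<or> (\<forall>k. v$k \<le> 0)"
  proof
    fix v assume "v \<in> roots Q1"
    then have "trv f m v \<in> std_roots T" by (rule roots_to_std)
    then have "(\<forall>c. 0 \<le> trv f m v c) \<or> (\<forall>c. trv f m v c \<le> 0)" using S1 by blast
    then show "(\<forall>k. 0 \<le> v$k) \<or> (\<forall>k. v$k \<le> 0)"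
      by (metis f_lt g_f trv_def)
  qed
  show "finite (positive_roots Q1)" using S2(1) by (simp add: pos_eq)
  have "card (positive_roots Q1) = card (std_pos T)"
    unfolding pos_eq by (rule card_image) (rule inj_on_subset[OF inj_untr], auto simp: std_pos_def)
  then show "2 * card (positive_roots Q1) = CARD('n) * coxeter_number T"
    using S2(2) card_n by simp
  fix c :: "'n \<Rightarrow> int" and k l
  assume cadj: "\<forall>k l. adjacent Q1 k l \<longrightarrow> c k = c l"
  have all: "\<forall>k<m. c (g k) = c (g 0)"
  proof (intro allI)
    fix k show "k < m \<longrightarrow> c (g k) = c (g 0)"
    proof (induction k rule: less_induct)
      case (less k)
      show ?case
      proof (intro impI, cases "k = 0")
        case False
        assume km: "k < m"
        then obtain l where l: "l < k" "std_edge T l k" using S3 False by blast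
        have "adjacent Q1 (g l) (g k)" using l km by (simp add: adj f_g)
        then have "c (g l) = c (g k)" using cadj by blast
        then show "c (g k) = c (g 0)" using less.IH[of l] l km by simp
      qed simp
    qed
  qed
  show "c k = c l" using all f_lt[of k] f_lt[of l] by (metis g_f)
qed

end

definition negf :: "(nat \<Rightarrow> int) \<Rightarrow> nat \<Rightarrow> int" where
  "negf w = (\<lambda>c. - w c)"

lemma negf_negf[simp]: "negf (negf w) = w" by (simp add: negf_def)

lemma srefl_neg: "srefl T k (negf w) = negf (srefl T k w)"
  by (rule ext) (simp add: srefl_def sum_negf negf_def)

lemma std_from_R:
  assumes a: "\<forall>k<dynkin_rank T. unit_nat k \<in> R"
    and b: "\<forall>w\<in>R. \<forall>k<dynkin_rank T. srefl T k w \<in> R \<union> negf ` R"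
    and c: "R \<subseteq> std_roots T"
    and d: "\<forall>w\<in>R. (\<forall>c. 0 \<le> w c) \<and> (\<exists>c. w c \<noteq> 0)"
  shows "std_pos T = R" and "\<forall>w\<in>std_roots T. (\<forall>c. 0 \<le> w c) \<or> (\<forall>c. w c \<le> 0)"
proof -
  have sub: "std_roots T \<subseteq> R \<union> negf ` R"
  proof
    fix w assume "w \<in> std_roots T"
    then show "w \<in> R \<union> negf ` R"
    proof (induction rule: std_roots.induct)
      case (simple k) then show ?case using a by auto
    next
      case (reflect w k)
      then show ?case
      proof (cases "w \<in> R")
        case True then show ?thesis using b reflect by blast
      next
        case False
        then obtain u where u: "u \<in> R" "w = negf u" using reflect by blast
        have "srefl T k u \<in> R \<union> negf ` R" using b u reflect by blast
        then have "negf (srefl T k u) \<in> R \<union> negf ` R" by auto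
        then show ?thesis using u by (simp add: srefl_neg)
      qed
    qed
  qed
  show "std_pos T = R"
  proof (intro equalityI subsetI)
    fix w assume w: "w \<in> std_pos T"
    then have "w \<in> R \<union> negf ` R" using sub by (auto simp: std_pos_def)
    moreover have "w \<notin> negf ` R"
    proof
      assume "w \<in> negf ` R"
      then obtain u where u: "u \<in> R" "w = negf u" by auto
      have "u c = 0" for c using d u w by (auto simp: std_pos_def negf_def) (metis neg_0_le_iff_le order_antisym)
      then show False using d u by auto
    qed
    ultimately show "w \<in> R" by auto
  next
    fix w assume "w \<in> R" then show "w \<in> std_pos T" using c d by (auto simp: std_pos_def)
  qed
  show "\<forall>w\<in>std_roots T. (\<forall>c. 0 \<le> w c) \<or> (\<forall>c. w c \<le> 0)"
    using sub d by (fastforce simp: negf_def)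
qed

definition good_type :: "dynkin_type \<Rightarrow> bool" where
  "good_type T \<longleftrightarrow> (\<forall>w\<in>std_roots T. (\<forall>c. 0 \<le> w c) \<or> (\<forall>c. w c \<le> 0))
     \<and> finite (std_pos T) \<and> 2 * card (std_pos T) = dynkin_rank T * coxeter_number T
     \<and> (\<forall>k. 0 < k \<and> k < dynkin_rank T \<longrightarrow> (\<exists>l<k. std_edge T l k))
     \<and> coxeter_number T > 0"

lemma prop_from_good:
  fixes T :: dynkin_type and Q1 :: "('n::finite \<times> 'n) set" and z :: "'n \<Rightarrow> complex"
  assumes "dynkin_quiver T Q1" and good: "good_type T"
  shows "complex_of_real (cat_volume Q1 z)
           = (\<Sum>i\<in>UNIV. \<Sum>j\<in>UNIV. complex_of_real (chi_inv Q1 i j) * z i * cnj (z j))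
       \<and> (\<Sum>i\<in>UNIV. \<Sum>j\<in>UNIV. complex_of_real (chi_inv Q1 i j) * z i * cnj (z j))
           = complex_of_real (1 / real (coxeter_number T) *
               (\<Sum>M\<in>positive_roots Q1. (cmod (central_charge z M))\<^sup>2))
       \<and> (\<forall>i j. chi_inv Q1 i j = 1 / real (coxeter_number T) *
               (\<Sum>M\<in>positive_roots Q1. real_of_int (M $ i) * real_of_int (M $ j)))"
proof -
  obtain f where f: "bij_betw f (UNIV :: 'n set) {0..<dynkin_rank T}"
    "\<forall>i j. adjacent Q1 i j \<longleftrightarrow> std_edge T (f i) (f j)"
    using assms(1) unfolding dynkin_quiver_def by blast
  interpret dq_setup T Q1 f using f by unfold_locales auto
  have G: "\<forall>w\<in>std_roots T. (\<forall>c. 0 \<le> w c) \<or> (\<forall>c. w c \<le> 0)"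
     "finite (std_pos T)" "2 * card (std_pos T) = dynkin_rank T * coxeter_number T"
     "\<forall>k. 0 < k \<and> k < dynkin_rank T \<longrightarrow> (\<exists>l<k. std_edge T l k)"
     "coxeter_number T > 0"
    using good by (auto simp: good_type_def)
  note tf = transfer_facts[OF G(1) G(2) G(3) G(4)]
  show ?thesis by (rule final_from_facts[OF tf(1) tf(2) tf(3) tf(4) G(5)])
qed

definition lf :: "int list \<Rightarrow> nat \<Rightarrow> int" where
  "lf l = (\<lambda>c. if c < length l then l ! c else 0)"

definition lrefl :: "dynkin_type \<Rightarrow> nat \<Rightarrow> int list \<Rightarrow> int list" where
  "lrefl T k l = l[k := l!k - sum_list (map (\<lambda>c. stdE T k c * l!c) [0..<length l])]"

definition unit_list :: "nat \<Rightarrow> nat \<Rightarrow> int list" where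
  "unit_list m k = map (\<lambda>c. if c = k then 1 else 0) [0..<m]"

lemma lf_lrefl:
  assumes "length l = dynkin_rank T" "k < dynkin_rank T"
  shows "lf (lrefl T k l) = srefl T k (lf l)"
proof -
  have "sum_list (map (\<lambda>c. stdE T k c * l!c) [0..<length l]) = sum_list (map (\<lambda>c. stdE T k c * lf l c) [0..<length l])"
    by (rule arg_cong[where f=sum_list], rule map_cong) (auto simp: lf_def)
  also have "\<dots> = (\<Sum>c\<in>{0..<length l}. stdE T k c * lf l c)"
    using sum_set_upt_conv_sum_list_nat[of "\<lambda>c. stdE T k c * lf l c" 0 "length l"] by simp
  finally have s: "sum_list (map (\<lambda>c. stdE T k c * l!c) [0..<length l]) = (\<Sum>c\<in>{0..<dynkin_rank T}. stdE T k c * lf l c)"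
    using assms by simp
  show ?thesis
    unfolding srefl_def s[symmetric]
    by (rule ext) (use assms in \<open>auto simp: lf_def lrefl_def nth_list_update\<close>)
qed

lemma lf_unit: "k < m \<Longrightarrow> lf (unit_list m k) = unit_nat k"
  by (rule ext) (auto simp: lf_def unit_list_def unit_nat_def)

lemma lf_inj: "length l = m \<Longrightarrow> length l' = m \<Longrightarrow> lf l = lf l' \<Longrightarrow> l = l'"
  by (metis (no_types, lifting) lf_def nth_equalityI)

definition okr :: "dynkin_type \<Rightarrow> nat \<Rightarrow> int list \<Rightarrow> int list list \<Rightarrow> bool" where
  "okr T k v S = (let r = lrefl T k v in r = v \<or> r = map uminus v \<or> r \<in> set S)"

fun chk :: "dynkin_type \<Rightarrow> int list list \<Rightarrow> int list list list \<Rightarrow> bool" where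
  "chk T prev [] = True"
| "chk T prev (cur # rest) = (list_all (\<lambda>v. list_all (\<lambda>k. okr T k v (prev @ (case rest of [] \<Rightarrow> [] | n # _ \<Rightarrow> n))) [0..<dynkin_rank T]) cur \<and> chk T cur rest)"

fun chkg :: "dynkin_type \<Rightarrow> int list list \<Rightarrow> int list list list \<Rightarrow> bool" where
  "chkg T prev [] = True"
| "chkg T prev (cur # rest) = (list_all (\<lambda>v. list_ex (\<lambda>u. list_ex (\<lambda>k. lrefl T k u = v) [0..<dynkin_rank T]) prev) cur \<and> chkg T cur rest)"

lemma okr_mono: "okr T k v S \<Longrightarrow> set S \<subseteq> set S' \<Longrightarrow> okr T k v S'"
  by (auto simp: okr_def Let_def)

lemma chk_sound:
  "chk T prev levels \<Longrightarrow> v \<in> set (concat levels) \<Longrightarrow> k < dynkin_rank T \<Longrightarrow> okr T k v (prev @ concat levels)"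
proof (induction levels arbitrary: prev)
  case Nil then show ?case by simp
next
  case (Cons cur rest)
  show ?case
  proof (cases "v \<in> set cur")
    case True
    then have "okr T k v (prev @ (case rest of [] \<Rightarrow> [] | n # _ \<Rightarrow> n))"
      using Cons.prems by (auto simp: list_all_iff)
    moreover have "set (prev @ (case rest of [] \<Rightarrow> [] | n # _ \<Rightarrow> n)) \<subseteq> set (prev @ concat (cur # rest))"
      by (cases rest) auto
    ultimately show ?thesis by (rule okr_mono)
  next
    case False
    then have "okr T k v (cur @ concat rest)" using Cons by auto
    then show ?thesis by (rule okr_mono) auto
  qed
qed

lemma chkg_sound:
  assumes "chkg T prev levels" "\<forall>u\<in>set prev. lf u \<in> std_roots T \<and> length u = dynkin_rank T"
    "\<forall>v\<in>set (concat levels). length v = dynkin_rank T"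
  shows "\<forall>v\<in>set (concat levels). lf v \<in> std_roots T"
  using assms
proof (induction levels arbitrary: prev)
  case Nil then show ?case by simp
next
  case (Cons cur rest)
  have cur: "\<forall>v\<in>set cur. lf v \<in> std_roots T"
  proof
    fix v assume v: "v \<in> set cur"
    then obtain u k where uk: "u \<in> set prev" "k < dynkin_rank T" "lrefl T k u = v"
      using Cons.prems(1) by (auto simp: list_all_iff list_ex_iff)
    then have "lf v = srefl T k (lf u)" using Cons.prems(2) lf_lrefl by blast
    then show "lf v \<in> std_roots T" using uk Cons.prems(2) std_roots.reflect by auto
  qed
  have "\<forall>v\<in>set (concat rest). lf v \<in> std_roots T"
    by (rule Cons.IH[of cur]) (use Cons.prems cur in auto)
  then show ?case using cur by auto
qed

lemma E_R_good:
  fixes LV :: "int list list list" and T :: dynkin_type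
  defines "L \<equiv> concat LV"
  assumes len: "list_all (\<lambda>l. length l = dynkin_rank T) L"
    and units: "list_all (\<lambda>k. unit_list (dynkin_rank T) k \<in> set (hd LV)) [0..<dynkin_rank T]"
    and lev1: "list_all (\<lambda>v. list_ex (\<lambda>k. v = unit_list (dynkin_rank T) k) [0..<dynkin_rank T]) (hd LV)"
    and gen: "chkg T (hd LV) (tl LV)"
    and clo: "chk T [] LV"
    and pos: "list_all (\<lambda>l. list_all (\<lambda>x. 0 \<le> x) l \<and> list_ex (\<lambda>x. x \<noteq> 0) l) L"
    and ne: "LV \<noteq> []"
  shows "std_pos T = lf ` set L" "\<forall>w\<in>std_roots T. (\<forall>c. 0 \<le> w c) \<or> (\<forall>c. w c \<le> 0)"
proof -
  let ?m = "dynkin_rank T"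
  let ?R = "lf ` set L"
  have LV: "LV = hd LV # tl LV" using ne by simp
  have setL: "set L = set (hd LV) \<union> set (concat (tl LV))" unfolding L_def by (subst LV) simp
  have lenall: "\<forall>v\<in>set L. length v = ?m" using len by (simp add: list_all_iff)
  have a: "\<forall>k<?m. unit_nat k \<in> ?R"
  proof (intro allI impI)
    fix k assume k: "k < ?m"
    then have "unit_list ?m k \<in> set L" using units setL by (auto simp: list_all_iff)
    then show "unit_nat k \<in> ?R" using lf_unit[OF k] by (metis image_eqI)
  qed
  have hdr: "\<forall>u\<in>set (hd LV). lf u \<in> std_roots T \<and> length u = ?m"
  proof
    fix u assume u: "u \<in> set (hd LV)"
    then obtain k where k: "k < ?m" "u = unit_list ?m k" using lev1 by (auto simp: list_all_iff list_ex_iff)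
    then show "lf u \<in> std_roots T \<and> length u = ?m"
      using lf_unit[OF k(1)] std_roots.simple[OF k(1)] by (simp add: unit_list_def)
  qed
  have c: "?R \<subseteq> std_roots T"
  proof -
    have "\<forall>v\<in>set (concat (tl LV)). lf v \<in> std_roots T"
      by (rule chkg_sound[OF gen hdr]) (use lenall setL in auto)
    then show ?thesis using hdr setL by auto
  qed
  have b: "\<forall>w\<in>?R. \<forall>k<?m. srefl T k w \<in> ?R \<union> negf ` ?R"
  proof (intro ballI allI impI)
    fix w k assume w: "w \<in> ?R" and k: "k < ?m"
    then obtain v where v: "v \<in> set L" "w = lf v" by auto
    have o: "okr T k v L" using chk_sound[OF clo _ k, of v] v(1) unfolding L_def by simp
    have lv: "length v = ?m" using lenall v by auto
    have sw: "srefl T k w = lf (lrefl T k v)" using lf_lrefl[OF lv k] v by simp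
    have "lf (map uminus v) = negf (lf v)" by (rule ext) (simp add: lf_def negf_def)
    then show "srefl T k w \<in> ?R \<union> negf ` ?R" using o v sw unfolding okr_def Let_def by auto
  qed
  have d: "\<forall>w\<in>?R. (\<forall>c. 0 \<le> w c) \<and> (\<exists>c. w c \<noteq> 0)"
  proof
    fix w assume "w \<in> ?R"
    then obtain v where v: "v \<in> set L" "w = lf v" by auto
    then have "list_all (\<lambda>x. 0 \<le> x) v" "list_ex (\<lambda>x. x \<noteq> 0) v" using pos by (auto simp: list_all_iff)
    then have "\<forall>x\<in>set v. 0 \<le> x" "\<exists>c<length v. v ! c \<noteq> 0"
      by (auto simp: list_all_iff list_ex_iff in_set_conv_nth)
    then show "(\<forall>c. 0 \<le> w c) \<and> (\<exists>c. w c \<noteq> 0)"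
      using v by (auto simp: lf_def)
  qed
  show "std_pos T = ?R" by (rule std_from_R(1)[OF a b c d])
  show "\<forall>w\<in>std_roots T. (\<forall>c. 0 \<le> w c) \<or> (\<forall>c. w c \<le> 0)" by (rule std_from_R(2)[OF a b c d])
qed

lemma E_card:
  assumes "list_all (\<lambda>l. length l = m) L" "distinct L"
  shows "card (lf ` set L) = length L"
proof -
  have "inj_on lf (set L)" using assms by (auto intro!: inj_onI lf_inj simp: list_all_iff)
  then show ?thesis using assms by (simp add: card_image distinct_card)
qed

definition LV6 :: "int list list list" where
  "LV6 = [[[0,0,0,0,0,1], [0,0,0,0,1,0], [0,0,0,1,0,0], [0,0,1,0,0,0], [0,1,0,0,0,0], [1,0,0,0,0,0]], [[0,0,0,1,1,0], [0,0,1,0,0,1], [0,0,1,1,0,0], [0,1,1,0,0,0], [1,1,0,0,0,0]], [[0,0,1,1,0,1], [0,0,1,1,1,0], [0,1,1,0,0,1], [0,1,1,1,0,0], [1,1,1,0,0,0]], [[0,0,1,1,1,1], [0,1,1,1,0,1], [0,1,1,1,1,0], [1,1,1,0,0,1], [1,1,1,1,0,0]], [[0,1,1,1,1,1], [0,1,2,1,0,1], [1,1,1,1,0,1], [1,1,1,1,1,0]], [[0,1,2,1,1,1], [1,1,1,1,1,1], [1,1,2,1,0,1]], [[0,1,2,2,1,1], [1,1,2,1,1,1], [1,2,2,1,0,1]], [[1,1,2,2,1,1], [1,2,2,1,1,1]], [[1,2,2,2,1,1]], [[1,2,3,2,1,1]], [[1,2,3,2,1,2]]]"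

lemma LV6_checks:
  "list_all (\<lambda>l. length l = dynkin_rank (Type_E 6)) (concat LV6)"
  "list_all (\<lambda>k. unit_list (dynkin_rank (Type_E 6)) k \<in> set (hd LV6)) [0..<dynkin_rank (Type_E 6)]"
  "list_all (\<lambda>v. list_ex (\<lambda>k. v = unit_list (dynkin_rank (Type_E 6)) k) [0..<dynkin_rank (Type_E 6)]) (hd LV6)"
  "chkg (Type_E 6) (hd LV6) (tl LV6)"
  "chk (Type_E 6) [] LV6"
  "list_all (\<lambda>l. list_all (\<lambda>x. 0 \<le> x) l \<and> list_ex (\<lambda>x. x \<noteq> 0) l) (concat LV6)"
  "LV6 \<noteq> []"
  "distinct (concat LV6)"
  "2 * length (concat LV6) = dynkin_rank (Type_E 6) * coxeter_number (Type_E 6)"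
  unfolding LV6_def by code_simp+

definition LV7 :: "int list list list" where
  "LV7 = [[[0,0,0,0,0,0,1], [0,0,0,0,0,1,0], [0,0,0,0,1,0,0], [0,0,0,1,0,0,0], [0,0,1,0,0,0,0], [0,1,0,0,0,0,0], [1,0,0,0,0,0,0]], [[0,0,0,0,1,1,0], [0,0,0,1,1,0,0], [0,0,1,0,0,0,1], [0,0,1,1,0,0,0], [0,1,1,0,0,0,0], [1,1,0,0,0,0,0]], [[0,0,0,1,1,1,0], [0,0,1,1,0,0,1], [0,0,1,1,1,0,0], [0,1,1,0,0,0,1], [0,1,1,1,0,0,0], [1,1,1,0,0,0,0]], [[0,0,1,1,1,0,1], [0,0,1,1,1,1,0], [0,1,1,1,0,0,1], [0,1,1,1,1,0,0], [1,1,1,0,0,0,1], [1,1,1,1,0,0,0]], [[0,0,1,1,1,1,1], [0,1,1,1,1,0,1], [0,1,1,1,1,1,0], [0,1,2,1,0,0,1], [1,1,1,1,0,0,1], [1,1,1,1,1,0,0]], [[0,1,1,1,1,1,1], [0,1,2,1,1,0,1], [1,1,1,1,1,0,1], [1,1,1,1,1,1,0], [1,1,2,1,0,0,1]], [[0,1,2,1,1,1,1], [0,1,2,2,1,0,1], [1,1,1,1,1,1,1], [1,1,2,1,1,0,1], [1,2,2,1,0,0,1]], [[0,1,2,2,1,1,1], [1,1,2,1,1,1,1], [1,1,2,2,1,0,1], [1,2,2,1,1,0,1]], [[0,1,2,2,2,1,1], [1,1,2,2,1,1,1], [1,2,2,1,1,1,1], [1,2,2,2,1,0,1]], [[1,1,2,2,2,1,1],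 [1,2,2,2,1,1,1], [1,2,3,2,1,0,1]], [[1,2,2,2,2,1,1], [1,2,3,2,1,0,2], [1,2,3,2,1,1,1]], [[1,2,3,2,1,1,2], [1,2,3,2,2,1,1]], [[1,2,3,2,2,1,2], [1,2,3,3,2,1,1]], [[1,2,3,3,2,1,2]], [[1,2,4,3,2,1,2]], [[1,3,4,3,2,1,2]], [[2,3,4,3,2,1,2]]]"

lemma LV7_checks:
  "list_all (\<lambda>l. length l = dynkin_rank (Type_E 7)) (concat LV7)"
  "list_all (\<lambda>k. unit_list (dynkin_rank (Type_E 7)) k \<in> set (hd LV7)) [0..<dynkin_rank (Type_E 7)]"
  "list_all (\<lambda>v. list_ex (\<lambda>k. v = unit_list (dynkin_rank (Type_E 7)) k) [0..<dynkin_rank (Type_E 7)]) (hd LV7)"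
  "chkg (Type_E 7) (hd LV7) (tl LV7)"
  "chk (Type_E 7) [] LV7"
  "list_all (\<lambda>l. list_all (\<lambda>x. 0 \<le> x) l \<and> list_ex (\<lambda>x. x \<noteq> 0) l) (concat LV7)"
  "LV7 \<noteq> []"
  "distinct (concat LV7)"
  "2 * length (concat LV7) = dynkin_rank (Type_E 7) * coxeter_number (Type_E 7)"
  unfolding LV7_def by code_simp+

definition LV8 :: "int list list list" where
  "LV8 = [[[0,0,0,0,0,0,0,1], [0,0,0,0,0,0,1,0], [0,0,0,0,0,1,0,0], [0,0,0,0,1,0,0,0], [0,0,0,1,0,0,0,0], [0,0,1,0,0,0,0,0], [0,1,0,0,0,0,0,0], [1,0,0,0,0,0,0,0]], [[0,0,0,0,0,1,1,0], [0,0,0,0,1,1,0,0], [0,0,0,1,1,0,0,0], [0,0,1,0,0,0,0,1], [0,0,1,1,0,0,0,0], [0,1,1,0,0,0,0,0], [1,1,0,0,0,0,0,0]], [[0,0,0,0,1,1,1,0], [0,0,0,1,1,1,0,0], [0,0,1,1,0,0,0,1], [0,0,1,1,1,0,0,0], [0,1,1,0,0,0,0,1], [0,1,1,1,0,0,0,0], [1,1,1,0,0,0,0,0]], [[0,0,0,1,1,1,1,0], [0,0,1,1,1,0,0,1], [0,0,1,1,1,1,0,0], [0,1,1,1,0,0,0,1], [0,1,1,1,1,0,0,0], [1,1,1,0,0,0,0,1], [1,1,1,1,0,0,0,0]], [[0,0,1,1,1,1,0,1], [0,0,1,1,1,1,1,0], [0,1,1,1,1,0,0,1], [0,1,1,1,1,1,0,0],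 [0,1,2,1,0,0,0,1], [1,1,1,1,0,0,0,1], [1,1,1,1,1,0,0,0]], [[0,0,1,1,1,1,1,1], [0,1,1,1,1,1,0,1], [0,1,1,1,1,1,1,0], [0,1,2,1,1,0,0,1], [1,1,1,1,1,0,0,1], [1,1,1,1,1,1,0,0], [1,1,2,1,0,0,0,1]], [[0,1,1,1,1,1,1,1], [0,1,2,1,1,1,0,1], [0,1,2,2,1,0,0,1], [1,1,1,1,1,1,0,1], [1,1,1,1,1,1,1,0], [1,1,2,1,1,0,0,1], [1,2,2,1,0,0,0,1]], [[0,1,2,1,1,1,1,1], [0,1,2,2,1,1,0,1], [1,1,1,1,1,1,1,1], [1,1,2,1,1,1,0,1], [1,1,2,2,1,0,0,1], [1,2,2,1,1,0,0,1]], [[0,1,2,2,1,1,1,1], [0,1,2,2,2,1,0,1], [1,1,2,1,1,1,1,1], [1,1,2,2,1,1,0,1], [1,2,2,1,1,1,0,1], [1,2,2,2,1,0,0,1]], [[0,1,2,2,2,1,1,1], [1,1,2,2,1,1,1,1], [1,1,2,2,2,1,0,1], [1,2,2,1,1,1,1,1], [1,2,2,2,1,1,0,1], [1,2,3,2,1,0,0,1]], [[0,1,2,2,2,2,1,1], [1,1,2,2,2,1,1,1], [1,2,2,2,1,1,1,1], [1,2,2,2,2,1,0,1], [1,2,3,2,1,0,0,2], [1,2,3,2,1,1,0,1]], [[1,1,2,2,2,2,1,1], [1,2,2,2,2,1,1,1], [1,2,3,2,1,1,0,2], [1,2,3,2,1,1,1,1], [1,2,3,2,2,1,0,1]], [[1,2,2,2,2,2,1,1],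 [1,2,3,2,1,1,1,2], [1,2,3,2,2,1,0,2], [1,2,3,2,2,1,1,1], [1,2,3,3,2,1,0,1]], [[1,2,3,2,2,1,1,2], [1,2,3,2,2,2,1,1], [1,2,3,3,2,1,0,2], [1,2,3,3,2,1,1,1]], [[1,2,3,2,2,2,1,2], [1,2,3,3,2,1,1,2], [1,2,3,3,2,2,1,1], [1,2,4,3,2,1,0,2]], [[1,2,3,3,2,2,1,2], [1,2,3,3,3,2,1,1], [1,2,4,3,2,1,1,2], [1,3,4,3,2,1,0,2]], [[1,2,3,3,3,2,1,2], [1,2,4,3,2,2,1,2], [1,3,4,3,2,1,1,2], [2,3,4,3,2,1,0,2]], [[1,2,4,3,3,2,1,2], [1,3,4,3,2,2,1,2], [2,3,4,3,2,1,1,2]], [[1,2,4,4,3,2,1,2], [1,3,4,3,3,2,1,2], [2,3,4,3,2,2,1,2]], [[1,3,4,4,3,2,1,2], [2,3,4,3,3,2,1,2]], [[1,3,5,4,3,2,1,2], [2,3,4,4,3,2,1,2]], [[1,3,5,4,3,2,1,3], [2,3,5,4,3,2,1,2]], [[2,3,5,4,3,2,1,3], [2,4,5,4,3,2,1,2]], [[2,4,5,4,3,2,1,3]], [[2,4,6,4,3,2,1,3]], [[2,4,6,5,3,2,1,3]], [[2,4,6,5,4,2,1,3]], [[2,4,6,5,4,3,1,3]], [[2,4,6,5,4,3,2,3]]]"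

lemma LV8_checks:
  "list_all (\<lambda>l. length l = dynkin_rank (Type_E 8)) (concat LV8)"
  "list_all (\<lambda>k. unit_list (dynkin_rank (Type_E 8)) k \<in> set (hd LV8)) [0..<dynkin_rank (Type_E 8)]"
  "list_all (\<lambda>v. list_ex (\<lambda>k. v = unit_list (dynkin_rank (Type_E 8)) k) [0..<dynkin_rank (Type_E 8)]) (hd LV8)"
  "chkg (Type_E 8) (hd LV8) (tl LV8)"
  "chk (Type_E 8) [] LV8"
  "list_all (\<lambda>l. list_all (\<lambda>x. 0 \<le> x) l \<and> list_ex (\<lambda>x. x \<noteq> 0) l) (concat LV8)"
  "LV8 \<noteq> []"
  "distinct (concat LV8)"
  "2 * length (concat LV8) = dynkin_rank (Type_E 8) * coxeter_number (Type_E 8)"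
  unfolding LV8_def by code_simp+

lemma good_from_lists:
  fixes LV :: "int list list list" and T :: dynkin_type
  assumes "list_all (\<lambda>l. length l = dynkin_rank T) (concat LV)"
    "list_all (\<lambda>k. unit_list (dynkin_rank T) k \<in> set (hd LV)) [0..<dynkin_rank T]"
    "list_all (\<lambda>v. list_ex (\<lambda>k. v = unit_list (dynkin_rank T) k) [0..<dynkin_rank T]) (hd LV)"
    "chkg T (hd LV) (tl LV)"
    "chk T [] LV"
    "list_all (\<lambda>l. list_all (\<lambda>x. 0 \<le> x) l \<and> list_ex (\<lambda>x. x \<noteq> 0) l) (concat LV)"
    "LV \<noteq> []"
    "distinct (concat LV)"
    "2 * length (concat LV) = dynkin_rank T * coxeter_number T"
    and S3: "\<forall>k. 0 < k \<and> k < dynkin_rank T \<longrightarrow> (\<exists>l<k. std_edge T l k)"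
    and h: "coxeter_number T > 0"
  shows "good_type T"
proof -
  note R = E_R_good[OF assms(1-7)]
  have "card (std_pos T) = length (concat LV)"
    unfolding R(1) by (rule E_card[OF assms(1) assms(8)])
  then show ?thesis using R assms(9) S3 h by (simp add: good_type_def)
qed

lemma E_S3: "m \<in> {6,7,8} \<Longrightarrow> \<forall>k. 0 < k \<and> k < dynkin_rank (Type_E m) \<longrightarrow> (\<exists>l<k. std_edge (Type_E m) l k)"
proof (intro allI impI)
  fix k assume m: "m \<in> {6,7,8}" and k: "0 < k \<and> k < dynkin_rank (Type_E m)"
  show "\<exists>l<k. std_edge (Type_E m) l k"
  proof (cases "k < m - 1")
    case True
    then show ?thesis using k by (intro exI[of _ "k - 1"]) (auto simp: std_edge_def)
  next
    case False
    then show ?thesis using k m by (intro exI[of _ 2]) (auto simp: std_edge_def)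
  qed
qed

lemma E_good: "m \<in> {6,7,8} \<Longrightarrow> good_type (Type_E m)"
proof -
  assume m: "m \<in> {6,7,8}"
  have h: "coxeter_number (Type_E m) > 0" by simp
  consider "m = 6" | "m = 7" | "m = 8" using m by auto
  then show ?thesis
  proof cases
    case 1
    have "good_type (Type_E 6)" by (rule good_from_lists[OF LV6_checks E_S3]) simp_all
    with 1 show ?thesis by simp
  next
    case 2
    have "good_type (Type_E 7)" by (rule good_from_lists[OF LV7_checks E_S3]) simp_all
    with 2 show ?thesis by simp
  next
    case 3
    have "good_type (Type_E 8)" by (rule good_from_lists[OF LV8_checks E_S3]) simp_all
    with 3 show ?thesis by simp
  qed
qed

lemma sum_if_eq_pred:
  fixes w :: "nat \<Rightarrow> int"
  shows "(\<Sum>c\<in>{0..<m}. if c + 1 = k then w c else 0) = (if 0 < k \<and> k - 1 < m then w (k - 1) else 0)"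
proof -
  have "(\<Sum>c\<in>{0..<m}. if c + 1 = k then w c else 0) = (\<Sum>c\<in>{0..<m}. if c = k - 1 \<and> 0 < k then w c else 0)"
    by (rule sum.cong) auto
  also have "\<dots> = (if 0 < k \<and> k - 1 < m then w (k - 1) else 0)"
    by (cases "0 < k") (simp_all add: sum.delta)
  finally show ?thesis .
qed

lemma sum_if_eq:
  fixes w :: "nat \<Rightarrow> int"
  shows "(\<Sum>c\<in>{0..<m}. if c = j then w c else 0) = (if j < m then w j else 0)"
  by (simp add: sum.delta)

definition indA :: "nat \<Rightarrow> nat \<Rightarrow> nat \<Rightarrow> int" where
  "indA a b = (\<lambda>c. if a \<le> c \<and> c \<le> b then 1 else 0)"

lemma srefl_A:
  assumes k: "k < m"
  shows "srefl (Type_A m) k w = w(k := (if 0 < k then w (k - 1) else 0) + (if k + 1 < m then w (k + 1) else 0) - w k)"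
proof -
  have "(\<Sum>c\<in>{0..<m}. stdE (Type_A m) k c * w c)
      = (\<Sum>c\<in>{0..<m}. (if c = k then 2 * w c else 0) - (if c + 1 = k then w c else 0) - (if c = k + 1 then w c else 0))"
    using k by (intro sum.cong) (auto simp: stdE_def std_edge_def)
  also have "\<dots> = (\<Sum>c\<in>{0..<m}. if c = k then 2 * w c else 0) - (\<Sum>c\<in>{0..<m}. if c + 1 = k then w c else 0) - (\<Sum>c\<in>{0..<m}. if c = k + 1 then w c else 0)"
    by (simp only: sum_subtractf)
  also have "\<dots> = 2 * w k - (if 0 < k then w (k - 1) else 0) - (if k + 1 < m then w (k + 1) else 0)"
    unfolding sum_if_eq_pred sum_if_eq[where m=m and j=k and w="\<lambda>c. 2 * w c"] sum_if_eq[where m=m and j="k+1" and w=w] using k by simp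
  finally show ?thesis by (simp add: srefl_def fun_eq_iff)
qed

definition RA :: "nat \<Rightarrow> (nat \<Rightarrow> int) set" where
  "RA m = {indA a b | a b. a \<le> b \<and> b < m}"

lemma RA_mem: "a \<le> b \<Longrightarrow> b < m \<Longrightarrow> indA a b \<in> RA m"
  unfolding RA_def by blast

lemma A_closure:
  assumes ab: "a \<le> b" "b < m" and k: "k < m"
  shows "srefl (Type_A m) k (indA a b) \<in> RA m \<union> negf ` RA m"
proof -
  note s = srefl_A[OF k]
  consider "k + 1 < a \<or> b + 1 < k \<or> (a < k \<and> k < b)" | "k + 1 = a" | "k = b + 1"
    | "a = k \<and> k = b" | "a = k \<and> k < b" | "a < k \<and> k = b" by linarith
  then show ?thesis
  proof cases
    case 1
    have "srefl (Type_A m) k (indA a b) = indA a b" unfolding s using ab k 1 by (auto simp: indA_def negf_def fun_eq_iff)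
    then show ?thesis using ab RA_mem[of a b m] by auto
  next
    case 2
    have "srefl (Type_A m) k (indA a b) = indA (a - 1) b" unfolding s using ab k 2 by (auto simp: indA_def negf_def fun_eq_iff)
    then show ?thesis using ab 2 RA_mem[of "a - 1" b m] by auto
  next
    case 3
    have "srefl (Type_A m) k (indA a b) = indA a (b + 1)" unfolding s using ab k 3 by (auto simp: indA_def negf_def fun_eq_iff)
    then show ?thesis using ab 3 k RA_mem[of a "b + 1" m] by auto
  next
    case 4
    have "srefl (Type_A m) k (indA a b) = negf (indA a b)" unfolding s using ab k 4 by (auto simp: indA_def negf_def fun_eq_iff)
    then show ?thesis using ab RA_mem[of a b m] by auto
  next
    case 5
    have "srefl (Type_A m) k (indA a b) = indA (a + 1) b" unfolding s using ab k 5 by (auto simp: indA_def negf_def fun_eq_iff)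
    then show ?thesis using ab 5 RA_mem[of "a + 1" b m] by auto
  next
    case 6
    have "srefl (Type_A m) k (indA a b) = indA a (b - 1)" unfolding s using ab k 6 by (auto simp: indA_def negf_def fun_eq_iff)
    then show ?thesis using ab 6 RA_mem[of a "b - 1" m] by auto
  qed
qed

lemma A_gen: "a + d < m \<Longrightarrow> indA a (a + d) \<in> std_roots (Type_A m)"
proof (induction d)
  case 0
  have "indA a a = unit_nat a" by (auto simp: indA_def unit_nat_def fun_eq_iff)
  then show ?case using 0 std_roots.simple[of a "Type_A m"] by simp
next
  case (Suc d)
  have k: "a + d + 1 < m" using Suc by simp
  have "srefl (Type_A m) (a + d + 1) (indA a (a + d)) = indA a (a + Suc d)"
    unfolding srefl_A[OF k] using k by (auto simp: indA_def fun_eq_iff)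
  then show ?case using std_roots.reflect[OF Suc.IH, of "a + d + 1"] Suc.prems k by simp
qed

lemma card_pairs: "card {(a, b). a \<le> b \<and> b < (m::nat)} * 2 = m * (m + 1)"
proof (induction m)
  case 0 then show ?case by simp
next
  case (Suc m)
  have eq: "{(a, b). a \<le> b \<and> b < Suc m} = {(a, b). a \<le> b \<and> b < m} \<union> (\<lambda>a. (a, m)) ` {0..m}"
    by auto
  have fin: "finite {(a, b). a \<le> b \<and> b < (m::nat)}"
    by (rule finite_subset[of _ "{0..<m} \<times> {0..<m}"]) auto
  have "card {(a, b). a \<le> b \<and> b < Suc m} = card {(a, b). a \<le> b \<and> b < m} + card ((\<lambda>a. (a, m)) ` {0..m})"
    unfolding eq by (rule card_Un_disjoint) (use fin in auto)
  also have "card ((\<lambda>a. (a, m)) ` {0..m}) = m + 1" by (subst card_image) (auto simp: inj_on_def)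
  finally show ?case using Suc.IH by (simp add: algebra_simps)
qed

lemma A_good: "1 \<le> m \<Longrightarrow> good_type (Type_A m)"
proof -
  assume m1: "1 \<le> m"
  let ?R = "RA m"
  have a: "\<forall>k<dynkin_rank (Type_A m). unit_nat k \<in> ?R"
  proof (intro allI impI)
    fix k assume "k < dynkin_rank (Type_A m)"
    moreover have "unit_nat k = indA k k" by (auto simp: indA_def unit_nat_def fun_eq_iff)
    ultimately show "unit_nat k \<in> ?R" by (auto simp: RA_def)
  qed
  have b: "\<forall>w\<in>?R. \<forall>k<dynkin_rank (Type_A m). srefl (Type_A m) k w \<in> ?R \<union> negf ` ?R"
  proof (intro ballI allI impI)
    fix w k assume "w \<in> ?R" "k < dynkin_rank (Type_A m)"
    then obtain a b where "w = indA a b" "a \<le> b" "b < m" "k < m" by (auto simp: RA_def)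
    then show "srefl (Type_A m) k w \<in> ?R \<union> negf ` ?R" using A_closure by blast
  qed
  have c: "?R \<subseteq> std_roots (Type_A m)"
  proof
    fix w assume "w \<in> ?R"
    then obtain a b where "w = indA a b" "a \<le> b" "b < m" by (auto simp: RA_def)
    then show "w \<in> std_roots (Type_A m)" using A_gen[of a "b - a" m] by simp
  qed
  have d: "\<forall>w\<in>?R. (\<forall>c. 0 \<le> w c) \<and> (\<exists>c. w c \<noteq> 0)"
    by (auto simp: RA_def indA_def)
  note R = std_from_R[OF a b c d]
  have inj: "inj_on (\<lambda>(a, b). indA a b) {(a, b). a \<le> b \<and> b < m}"
  proof (rule inj_onI, clarify)
    fix a b a' b' assume h: "a \<le> b" "b < m" "a' \<le> b'" "b' < m" "indA a b = indA a' b'"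
    have "indA a b a = indA a' b' a" "indA a b a' = indA a' b' a'" "indA a b b = indA a' b' b" "indA a b b' = indA a' b' b'"
      using h(5) by simp_all
    then show "a = a' \<and> b = b'" using h by (auto simp: indA_def split: if_splits)
  qed
  have RA_img: "?R = (\<lambda>(a, b). indA a b) ` {(a, b). a \<le> b \<and> b < m}" by (auto simp: RA_def)
  have fin: "finite {(a, b). a \<le> b \<and> b < (m::nat)}"
    by (rule finite_subset[of _ "{0..<m} \<times> {0..<m}"]) auto
  have card: "card ?R = card {(a, b). a \<le> b \<and> b < m}"
    unfolding RA_img by (rule card_image[OF inj])
  have S3: "\<forall>k. 0 < k \<and> k < dynkin_rank (Type_A m) \<longrightarrow> (\<exists>l<k. std_edge (Type_A m) l k)"
  proof (intro allI impI)
    fix k assume "0 < k \<and> k < dynkin_rank (Type_A m)"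
    then show "\<exists>l<k. std_edge (Type_A m) l k" by (intro exI[of _ "k - 1"]) (auto simp: std_edge_def)
  qed
  show ?thesis
    unfolding good_type_def using R card card_pairs[of m] S3 fin RA_img
    by (auto simp: mult.commute)
qed

lemma sum_if_cond:
  fixes f :: "nat \<Rightarrow> int"
  shows "(\<Sum>c\<in>A. if P c \<and> Q then f c else 0) = (if Q then (\<Sum>c\<in>A. if P c then f c else 0) else 0)"
  by (cases Q) simp_all

definition nbD :: "nat \<Rightarrow> nat \<Rightarrow> (nat \<Rightarrow> int) \<Rightarrow> int" where
  "nbD n k w = (if k = n + 3 then w (n + 1) else
     (if 0 < k then w (k - 1) else 0) + (if k + 1 \<le> n + 2 then w (k + 1) else 0) + (if k = n + 1 then w (n + 3) else 0))"

lemma srefl_D: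
  assumes k: "k < n + 4"
  shows "srefl (Type_D (n + 4)) k w = w(k := nbD n k w - w k)"
proof -
  have "(\<Sum>c\<in>{0..<n+4}. stdE (Type_D (n + 4)) k c * w c)
      = (\<Sum>c\<in>{0..<n+4}. (if c = k then 2 * w c else 0) - (if c + 1 = k \<and> k \<le> n + 2 then w c else 0)
            - (if c = k + 1 \<and> k + 1 \<le> n + 2 then w c else 0) - (if c = n + 3 \<and> k = n + 1 then w c else 0)
            - (if c = n + 1 \<and> k = n + 3 then w c else 0))"
    using k by (intro sum.cong) (auto simp: stdE_def std_edge_def)
  also have "\<dots> = (\<Sum>c\<in>{0..<n+4}. if c = k then 2 * w c else 0) - (\<Sum>c\<in>{0..<n+4}. if c + 1 = k \<and> k \<le> n + 2 then w c else 0)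
            - (\<Sum>c\<in>{0..<n+4}. if c = k + 1 \<and> k + 1 \<le> n + 2 then w c else 0) - (\<Sum>c\<in>{0..<n+4}. if c = n + 3 \<and> k = n + 1 then w c else 0)
            - (\<Sum>c\<in>{0..<n+4}. if c = n + 1 \<and> k = n + 3 then w c else 0)"
    by (simp only: sum_subtractf)
  also have "\<dots> = 2 * w k - nbD n k w"
    unfolding sum_if_cond sum_if_eq_pred sum_if_eq[where m="n+4" and j=k and w="\<lambda>c. 2 * w c"]
      sum_if_eq[where m="n+4" and j="k+1" and w=w] sum_if_eq[where m="n+4" and j="n+3" and w=w]
      sum_if_eq[where m="n+4" and j="n+1" and w=w]
    using k by (auto simp: nbD_def)
  finally show ?thesis by (simp add: srefl_def fun_eq_iff)
qed

definition gD :: "nat \<Rightarrow> nat \<Rightarrow> nat \<Rightarrow> nat \<Rightarrow> int" where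
  "gD n i j = (\<lambda>c. if c \<le> n + 1 then (if i \<le> c then 1 else 0) + (if j \<le> c then 1 else 0)
      else if c = n + 2 then (if j \<le> n + 2 then 1 else 0) else if c = n + 3 then 1 else 0)"

definition RD :: "nat \<Rightarrow> (nat \<Rightarrow> int) set" where
  "RD n = {indA a b | a b. a \<le> b \<and> b \<le> n + 2} \<union> {gD n i j | i j. i < j \<and> j \<le> n + 3}"

lemma RD_memA: "a \<le> b \<Longrightarrow> b \<le> n + 2 \<Longrightarrow> indA a b \<in> RD n"
  unfolding RD_def by blast

lemma RD_memG: "i < j \<Longrightarrow> j \<le> n + 3 \<Longrightarrow> gD n i j \<in> RD n"
  unfolding RD_def by blast

lemma upd_eq_iff: "(w(k := x) = R) \<longleftrightarrow> (x = R k \<and> (\<forall>c. c \<noteq> k \<longrightarrow> w c = R c))"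
  by (auto simp: fun_eq_iff)

lemma D_closureA:
  assumes h: "a \<le> b" "b \<le> n + 2" and k: "k < n + 4"
  shows "srefl (Type_D (n + 4)) k (indA a b) \<in> RD n \<union> negf ` RD n"
proof -
  note s = srefl_D[OF k]
  show ?thesis
  proof (cases "k = n + 3")
    assume c1: "k = n + 3"
    show ?thesis
    proof (cases "b < n + 1")
      assume c2: "b < n + 1"
      have "srefl (Type_D (n + 4)) k (indA a b) = indA a b"
        unfolding s upd_eq_iff using h k c1 c2
        apply (intro conjI allI impI)
         apply (simp add: nbD_def gD_def indA_def negf_def)
        apply (auto simp: gD_def indA_def negf_def)
        done
      then show ?thesis using h k c1 c2 RD_memA[of a b n] by auto
    next
      assume c2n: "\<not> (b < n + 1)"
      show ?thesis
      proof (cases "n + 1 < a")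
        assume c3: "n + 1 < a"
        have "srefl (Type_D (n + 4)) k (indA a b) = indA a b"
          unfolding s upd_eq_iff using h k c1 c2n c3
          apply (intro conjI allI impI)
           apply (simp add: nbD_def gD_def indA_def negf_def)
          apply (auto simp: gD_def indA_def negf_def)
          done
        then show ?thesis using h k c1 c2n c3 RD_memA[of a b n] by auto
      next
        assume c3n: "\<not> (n + 1 < a)"
        show ?thesis
        proof (cases "b = n + 1")
          assume c4: "b = n + 1"
          have "srefl (Type_D (n + 4)) k (indA a b) = gD n a (n + 3)"
            unfolding s upd_eq_iff using h k c1 c2n c3n c4
            apply (intro conjI allI impI)
             apply (simp add: nbD_def gD_def indA_def negf_def)
            apply (auto simp: gD_def indA_def negf_def)
            done
          then show ?thesis using h k c1 c2n c3n c4 RD_memG[of a "n + 3" n] by auto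
        next
          assume c4n: "\<not> (b = n + 1)"
          have "srefl (Type_D (n + 4)) k (indA a b) = gD n a (n + 2)"
            unfolding s upd_eq_iff using h k c1 c2n c3n c4n
            apply (intro conjI allI impI)
             apply (simp add: nbD_def gD_def indA_def negf_def)
            apply (auto simp: gD_def indA_def negf_def)
            done
          then show ?thesis using h k c1 c2n c3n c4n RD_memG[of a "n + 2" n] by auto
        qed
      qed
    qed
  next
    assume c1n: "\<not> (k = n + 3)"
    show ?thesis
    proof (cases "k + 1 < a")
      assume c5: "k + 1 < a"
      have "srefl (Type_D (n + 4)) k (indA a b) = indA a b"
        unfolding s upd_eq_iff using h k c1n c5
        apply (intro conjI allI impI)
         apply (simp add: nbD_def gD_def indA_def negf_def)
        apply (auto simp: gD_def indA_def negf_def)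
        done
      then show ?thesis using h k c1n c5 RD_memA[of a b n] by auto
    next
      assume c5n: "\<not> (k + 1 < a)"
      show ?thesis
      proof (cases "k + 1 = a")
        assume c6: "k + 1 = a"
        have "srefl (Type_D (n + 4)) k (indA a b) = indA (a - 1) b"
          unfolding s upd_eq_iff using h k c1n c5n c6
          apply (intro conjI allI impI)
           apply (simp add: nbD_def gD_def indA_def negf_def)
          apply (auto simp: gD_def indA_def negf_def)
          done
        then show ?thesis using h k c1n c5n c6 RD_memA[of "a - 1" b n] by auto
      next
        assume c6n: "\<not> (k + 1 = a)"
        show ?thesis
        proof (cases "b + 1 < k")
          assume c7: "b + 1 < k"
          have "srefl (Type_D (n + 4)) k (indA a b) = indA a b"
            unfolding s upd_eq_iff using h k c1n c5n c6n c7
            apply (intro conjI allI impI)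
             apply (simp add: nbD_def gD_def indA_def negf_def)
            apply (auto simp: gD_def indA_def negf_def)
            done
          then show ?thesis using h k c1n c5n c6n c7 RD_memA[of a b n] by auto
        next
          assume c7n: "\<not> (b + 1 < k)"
          show ?thesis
          proof (cases "k = b + 1")
            assume c8: "k = b + 1"
            have "srefl (Type_D (n + 4)) k (indA a b) = indA a (b + 1)"
              unfolding s upd_eq_iff using h k c1n c5n c6n c7n c8
              apply (intro conjI allI impI)
               apply (simp add: nbD_def gD_def indA_def negf_def)
              apply (auto simp: gD_def indA_def negf_def)
              done
            then show ?thesis using h k c1n c5n c6n c7n c8 RD_memA[of a "b + 1" n] by auto
          next
            assume c8n: "\<not> (k = b + 1)"
            show ?thesis
            proof (cases "a = k")
              assume c9: "a = k"
              show ?thesis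
              proof (cases "k = b")
                assume c10: "k = b"
                have "srefl (Type_D (n + 4)) k (indA a b) = negf (indA a b)"
                  unfolding s upd_eq_iff using h k c1n c5n c6n c7n c8n c9 c10
                  apply (intro conjI allI impI)
                   apply (simp add: nbD_def gD_def indA_def negf_def)
                  apply (auto simp: gD_def indA_def negf_def)
                  done
                then show ?thesis using h k c1n c5n c6n c7n c8n c9 c10 RD_memA[of a b n] by auto
              next
                assume c10n: "\<not> (k = b)"
                have "srefl (Type_D (n + 4)) k (indA a b) = indA (a + 1) b"
                  unfolding s upd_eq_iff using h k c1n c5n c6n c7n c8n c9 c10n
                  apply (intro conjI allI impI)
                   apply (simp add: nbD_def gD_def indA_def negf_def)
                  apply (auto simp: gD_def indA_def negf_def)
                  done
                then show ?thesis using h k c1n c5n c6n c7n c8n c9 c10n RD_memA[of "a + 1" b n] by auto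
              qed
            next
              assume c9n: "\<not> (a = k)"
              show ?thesis
              proof (cases "k = b")
                assume c11: "k = b"
                have "srefl (Type_D (n + 4)) k (indA a b) = indA a (b - 1)"
                  unfolding s upd_eq_iff using h k c1n c5n c6n c7n c8n c9n c11
                  apply (intro conjI allI impI)
                   apply (simp add: nbD_def gD_def indA_def negf_def)
                  apply (auto simp: gD_def indA_def negf_def)
                  done
                then show ?thesis using h k c1n c5n c6n c7n c8n c9n c11 RD_memA[of a "b - 1" n] by auto
              next
                assume c11n: "\<not> (k = b)"
                have "srefl (Type_D (n + 4)) k (indA a b) = indA a b"
                  unfolding s upd_eq_iff using h k c1n c5n c6n c7n c8n c9n c11n
                  apply (intro conjI allI impI)
                   apply (simp add: nbD_def gD_def indA_def negf_def)
                  apply (auto simp: gD_def indA_def negf_def)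
                  done
                then show ?thesis using h k c1n c5n c6n c7n c8n c9n c11n RD_memA[of a b n] by auto
              qed
            qed
          qed
        qed
      qed
    qed
  qed
qed

lemma D_closureG:
  assumes h: "i < j" "j \<le> n + 3" and k: "k < n + 4"
  shows "srefl (Type_D (n + 4)) k (gD n i j) \<in> RD n \<union> negf ` RD n"
proof -
  note s = srefl_D[OF k]
  show ?thesis
  proof (cases "k = n + 3")
    assume c12: "k = n + 3"
    show ?thesis
    proof (cases "j \<le> n + 1")
      assume c13: "j \<le> n + 1"
      have "srefl (Type_D (n + 4)) k (gD n i j) = gD n i j"
        unfolding s upd_eq_iff using h k c12 c13
        apply (intro conjI allI impI)
         apply (simp add: nbD_def gD_def indA_def negf_def)
        apply (auto simp: gD_def indA_def negf_def)
        done
      then show ?thesis using h k c12 c13 RD_memG[of i j n] by auto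
    next
      assume c13n: "\<not> (j \<le> n + 1)"
      show ?thesis
      proof (cases "j = n + 2")
        assume c14: "j = n + 2"
        have "srefl (Type_D (n + 4)) k (gD n i j) = indA i (n + 2)"
          unfolding s upd_eq_iff using h k c12 c13n c14
          apply (intro conjI allI impI)
           apply (simp add: nbD_def gD_def indA_def negf_def)
          apply (auto simp: gD_def indA_def negf_def)
          done
        then show ?thesis using h k c12 c13n c14 RD_memA[of i "n + 2" n] by auto
      next
        assume c14n: "\<not> (j = n + 2)"
        show ?thesis
        proof (cases "i \<le> n + 1")
          assume c15: "i \<le> n + 1"
          have "srefl (Type_D (n + 4)) k (gD n i j) = indA i (n + 1)"
            unfolding s upd_eq_iff using h k c12 c13n c14n c15
            apply (intro conjI allI impI)
             apply (simp add: nbD_def gD_def indA_def negf_def)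
            apply (auto simp: gD_def indA_def negf_def)
            done
          then show ?thesis using h k c12 c13n c14n c15 RD_memA[of i "n + 1" n] by auto
        next
          assume c15n: "\<not> (i \<le> n + 1)"
          have "srefl (Type_D (n + 4)) k (gD n i j) = negf (gD n i j)"
            unfolding s upd_eq_iff using h k c12 c13n c14n c15n
            apply (intro conjI allI impI)
             apply (simp add: nbD_def gD_def indA_def negf_def)
            apply (auto simp: gD_def indA_def negf_def)
            done
          then show ?thesis using h k c12 c13n c14n c15n RD_memG[of i j n] by auto
        qed
      qed
    qed
  next
    assume c12n: "\<not> (k = n + 3)"
    show ?thesis
    proof (cases "k = n + 2")
      assume c16: "k = n + 2"
      show ?thesis
      proof (cases "j \<le> n + 1")
        assume c17: "j \<le> n + 1"
        have "srefl (Type_D (n + 4)) k (gD n i j) = gD n i j"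
          unfolding s upd_eq_iff using h k c12n c16 c17
          apply (intro conjI allI impI)
           apply (simp add: nbD_def gD_def indA_def negf_def)
          apply (auto simp: gD_def indA_def negf_def)
          done
        then show ?thesis using h k c12n c16 c17 RD_memG[of i j n] by auto
      next
        assume c17n: "\<not> (j \<le> n + 1)"
        show ?thesis
        proof (cases "j = n + 2")
          assume c18: "j = n + 2"
          have "srefl (Type_D (n + 4)) k (gD n i j) = gD n i (n + 3)"
            unfolding s upd_eq_iff using h k c12n c16 c17n c18
            apply (intro conjI allI impI)
             apply (simp add: nbD_def gD_def indA_def negf_def)
            apply (auto simp: gD_def indA_def negf_def)
            done
          then show ?thesis using h k c12n c16 c17n c18 RD_memG[of i "n + 3" n] by auto
        next
          assume c18n: "\<not> (j = n + 2)"
          show ?thesis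
          proof (cases "i \<le> n + 1")
            assume c19: "i \<le> n + 1"
            have "srefl (Type_D (n + 4)) k (gD n i j) = gD n i (n + 2)"
              unfolding s upd_eq_iff using h k c12n c16 c17n c18n c19
              apply (intro conjI allI impI)
               apply (simp add: nbD_def gD_def indA_def negf_def)
              apply (auto simp: gD_def indA_def negf_def)
              done
            then show ?thesis using h k c12n c16 c17n c18n c19 RD_memG[of i "n + 2" n] by auto
          next
            assume c19n: "\<not> (i \<le> n + 1)"
            have "srefl (Type_D (n + 4)) k (gD n i j) = gD n i j"
              unfolding s upd_eq_iff using h k c12n c16 c17n c18n c19n
              apply (intro conjI allI impI)
               apply (simp add: nbD_def gD_def indA_def negf_def)
              apply (auto simp: gD_def indA_def negf_def)
              done
            then show ?thesis using h k c12n c16 c17n c18n c19n RD_memG[of i j n] by auto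
          qed
        qed
      qed
    next
      assume c16n: "\<not> (k = n + 2)"
      show ?thesis
      proof (cases "k = n + 1")
        assume c20: "k = n + 1"
        show ?thesis
        proof (cases "j \<le> n")
          assume c21: "j \<le> n"
          have "srefl (Type_D (n + 4)) k (gD n i j) = gD n i j"
            unfolding s upd_eq_iff using h k c12n c16n c20 c21
            apply (intro conjI allI impI)
             apply (simp add: nbD_def gD_def indA_def negf_def)
            apply (auto simp: gD_def indA_def negf_def)
            done
          then show ?thesis using h k c12n c16n c20 c21 RD_memG[of i j n] by auto
        next
          assume c21n: "\<not> (j \<le> n)"
          show ?thesis
          proof (cases "j = n + 1")
            assume c22: "j = n + 1"
            have "srefl (Type_D (n + 4)) k (gD n i j) = gD n i (n + 2)"
              unfolding s upd_eq_iff using h k c12n c16n c20 c21n c22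
              apply (intro conjI allI impI)
               apply (simp add: nbD_def gD_def indA_def negf_def)
              apply (auto simp: gD_def indA_def negf_def)
              done
            then show ?thesis using h k c12n c16n c20 c21n c22 RD_memG[of i "n + 2" n] by auto
          next
            assume c22n: "\<not> (j = n + 1)"
            show ?thesis
            proof (cases "j = n + 2")
              assume c23: "j = n + 2"
              show ?thesis
              proof (cases "i \<le> n")
                assume c24: "i \<le> n"
                have "srefl (Type_D (n + 4)) k (gD n i j) = gD n i (n + 1)"
                  unfolding s upd_eq_iff using h k c12n c16n c20 c21n c22n c23 c24
                  apply (intro conjI allI impI)
                   apply (simp add: nbD_def gD_def indA_def negf_def)
                  apply (auto simp: gD_def indA_def negf_def)
                  done
                then show ?thesis using h k c12n c16n c20 c21n c22n c23 c24 RD_memG[of i "n + 1" n] by auto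
              next
                assume c24n: "\<not> (i \<le> n)"
                have "srefl (Type_D (n + 4)) k (gD n i j) = gD n i j"
                  unfolding s upd_eq_iff using h k c12n c16n c20 c21n c22n c23 c24n
                  apply (intro conjI allI impI)
                   apply (simp add: nbD_def gD_def indA_def negf_def)
                  apply (auto simp: gD_def indA_def negf_def)
                  done
                then show ?thesis using h k c12n c16n c20 c21n c22n c23 c24n RD_memG[of i j n] by auto
              qed
            next
              assume c23n: "\<not> (j = n + 2)"
              show ?thesis
              proof (cases "i \<le> n")
                assume c25: "i \<le> n"
                have "srefl (Type_D (n + 4)) k (gD n i j) = gD n i j"
                  unfolding s upd_eq_iff using h k c12n c16n c20 c21n c22n c23n c25
                  apply (intro conjI allI impI)
                   apply (simp add: nbD_def gD_def indA_def negf_def)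
                  apply (auto simp: gD_def indA_def negf_def)
                  done
                then show ?thesis using h k c12n c16n c20 c21n c22n c23n c25 RD_memG[of i j n] by auto
              next
                assume c25n: "\<not> (i \<le> n)"
                show ?thesis
                proof (cases "i = n + 1")
                  assume c26: "i = n + 1"
                  have "srefl (Type_D (n + 4)) k (gD n i j) = gD n (n + 2) (n + 3)"
                    unfolding s upd_eq_iff using h k c12n c16n c20 c21n c22n c23n c25n c26
                    apply (intro conjI allI impI)
                     apply (simp add: nbD_def gD_def indA_def negf_def)
                    apply (auto simp: gD_def indA_def negf_def)
                    done
                  then show ?thesis using h k c12n c16n c20 c21n c22n c23n c25n c26 RD_memG[of "n + 2" "n + 3" n] by auto
                next
                  assume c26n: "\<not> (i = n + 1)"
                  have "srefl (Type_D (n + 4)) k (gD n i j) = gD n (n + 1) (n + 3)"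
                    unfolding s upd_eq_iff using h k c12n c16n c20 c21n c22n c23n c25n c26n
                    apply (intro conjI allI impI)
                     apply (simp add: nbD_def gD_def indA_def negf_def)
                    apply (auto simp: gD_def indA_def negf_def)
                    done
                  then show ?thesis using h k c12n c16n c20 c21n c22n c23n c25n c26n RD_memG[of "n + 1" "n + 3" n] by auto
                qed
              qed
            qed
          qed
        qed
      next
        assume c20n: "\<not> (k = n + 1)"
        show ?thesis
        proof (cases "k + 1 = i")
          assume c27: "k + 1 = i"
          have "srefl (Type_D (n + 4)) k (gD n i j) = gD n (i - 1) j"
            unfolding s upd_eq_iff using h k c12n c16n c20n c27
            apply (intro conjI allI impI)
             apply (simp add: nbD_def gD_def indA_def negf_def)
            apply (auto simp: gD_def indA_def negf_def)
            done
          then show ?thesis using h k c12n c16n c20n c27 RD_memG[of "i - 1" j n] by auto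
        next
          assume c27n: "\<not> (k + 1 = i)"
          show ?thesis
          proof (cases "k = i")
            assume c28: "k = i"
            show ?thesis
            proof (cases "j = i + 1")
              assume c29: "j = i + 1"
              have "srefl (Type_D (n + 4)) k (gD n i j) = gD n i j"
                unfolding s upd_eq_iff using h k c12n c16n c20n c27n c28 c29
                apply (intro conjI allI impI)
                 apply (simp add: nbD_def gD_def indA_def negf_def)
                apply (auto simp: gD_def indA_def negf_def)
                done
              then show ?thesis using h k c12n c16n c20n c27n c28 c29 RD_memG[of i j n] by auto
            next
              assume c29n: "\<not> (j = i + 1)"
              have "srefl (Type_D (n + 4)) k (gD n i j) = gD n (i + 1) j"
                unfolding s upd_eq_iff using h k c12n c16n c20n c27n c28 c29n
                apply (intro conjI allI impI)
                 apply (simp add: nbD_def gD_def indA_def negf_def)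
                apply (auto simp: gD_def indA_def negf_def)
                done
              then show ?thesis using h k c12n c16n c20n c27n c28 c29n RD_memG[of "i + 1" j n] by auto
            qed
          next
            assume c28n: "\<not> (k = i)"
            show ?thesis
            proof (cases "k + 1 = j \<and> i < k")
              assume c30: "k + 1 = j \<and> i < k"
              have "srefl (Type_D (n + 4)) k (gD n i j) = gD n i (j - 1)"
                unfolding s upd_eq_iff using h k c12n c16n c20n c27n c28n c30
                apply (intro conjI allI impI)
                 apply (simp add: nbD_def gD_def indA_def negf_def)
                apply (auto simp: gD_def indA_def negf_def)
                done
              then show ?thesis using h k c12n c16n c20n c27n c28n c30 RD_memG[of i "j - 1" n] by auto
            next
              assume c30n: "\<not> (k + 1 = j \<and> i < k)"
              show ?thesis
              proof (cases "k = j")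
                assume c31: "k = j"
                have "srefl (Type_D (n + 4)) k (gD n i j) = gD n i (j + 1)"
                  unfolding s upd_eq_iff using h k c12n c16n c20n c27n c28n c30n c31
                  apply (intro conjI allI impI)
                   apply (simp add: nbD_def gD_def indA_def negf_def)
                  apply (auto simp: gD_def indA_def negf_def)
                  done
                then show ?thesis using h k c12n c16n c20n c27n c28n c30n c31 RD_memG[of i "j + 1" n] by auto
              next
                assume c31n: "\<not> (k = j)"
                have "srefl (Type_D (n + 4)) k (gD n i j) = gD n i j"
                  unfolding s upd_eq_iff using h k c12n c16n c20n c27n c28n c30n c31n
                  apply (intro conjI allI impI)
                   apply (simp add: nbD_def gD_def indA_def negf_def)
                  apply (auto simp: gD_def indA_def negf_def)
                  done
                then show ?thesis using h k c12n c16n c20n c27n c28n c30n c31n RD_memG[of i j n] by auto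
              qed
            qed
          qed
        qed
      qed
    qed
  qed
qed

lemma D_eq:
  assumes k: "k < n + 4" and "nbD n k w - w k = R k" and "\<And>c. c \<noteq> k \<Longrightarrow> w c = R c"
  shows "srefl (Type_D (n + 4)) k w = R"
  using assms unfolding srefl_D[OF k] upd_eq_iff by auto

lemma g1: "i \<le> n + 1 \<Longrightarrow> srefl (Type_D (n + 4)) (n + 3) (indA i (n + 1)) = gD n i (n + 3)"
  by (rule D_eq) (auto simp: nbD_def indA_def gD_def)

lemma g2: "i \<le> n + 1 \<Longrightarrow> srefl (Type_D (n + 4)) (n + 3) (indA i (n + 2)) = gD n i (n + 2)"
  by (rule D_eq) (auto simp: nbD_def indA_def gD_def)

lemma g3: "i \<le> n \<Longrightarrow> srefl (Type_D (n + 4)) (n + 1) (gD n i (n + 2)) = gD n i (n + 1)"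
  by (rule D_eq) (auto simp: nbD_def indA_def gD_def)

lemma g4: "i < j \<Longrightarrow> j \<le> n \<Longrightarrow> srefl (Type_D (n + 4)) j (gD n i (j + 1)) = gD n i j"
  by (rule D_eq) (auto simp: nbD_def indA_def gD_def)

lemma g5: "gD n (n + 2) (n + 3) = unit_nat (n + 3)"
  by (auto simp: gD_def unit_nat_def fun_eq_iff)

lemma g6: "a + d + 1 \<le> n + 2 \<Longrightarrow> srefl (Type_D (n + 4)) (a + d + 1) (indA a (a + d)) = indA a (a + d + 1)"
  by (rule D_eq) (auto simp: nbD_def indA_def gD_def)

lemma D_genA: "a + d \<le> n + 2 \<Longrightarrow> indA a (a + d) \<in> std_roots (Type_D (n + 4))"
proof (induction d)
  case 0
  have "indA a a = unit_nat a" by (auto simp: indA_def unit_nat_def fun_eq_iff)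
  then show ?case using 0 std_roots.simple[of a "Type_D (n + 4)"] by simp
next
  case (Suc d)
  have "srefl (Type_D (n + 4)) (a + d + 1) (indA a (a + d)) = indA a (a + d + 1)"
    using Suc.prems by (intro g6) simp
  moreover have "indA a (a + d) \<in> std_roots (Type_D (n + 4))" using Suc by simp
  ultimately show ?case using std_roots.reflect[of "indA a (a + d)" "Type_D (n + 4)" "a + d + 1"] Suc.prems
    by simp
qed

lemma D_genA': "a \<le> b \<Longrightarrow> b \<le> n + 2 \<Longrightarrow> indA a b \<in> std_roots (Type_D (n + 4))"
  using D_genA[of a "b - a" n] by simp

lemma D_genG_high: "i < j \<Longrightarrow> j \<le> n + 3 \<Longrightarrow> n + 2 \<le> j \<Longrightarrow> gD n i j \<in> std_roots (Type_D (n + 4))"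
proof -
  assume h: "i < j" "j \<le> n + 3" "n + 2 \<le> j"
  consider "j = n + 3" "i \<le> n + 1" | "j = n + 3" "i = n + 2" | "j = n + 2" using h by linarith
  then show ?thesis
  proof cases
    case 1
    then show ?thesis using g1[OF 1(2)] std_roots.reflect[OF D_genA'[of i "n + 1" n], of "n + 3"] by simp
  next
    case 2
    then show ?thesis using g5[of n] std_roots.simple[of "n + 3" "Type_D (n + 4)"] by simp
  next
    case 3
    then have "i \<le> n + 1" using h by simp
    then show ?thesis using 3 g2 std_roots.reflect[OF D_genA'[of i "n + 2" n], of "n + 3"] by simp
  qed
qed

lemma D_genG_low: "i < n + 1 - d \<Longrightarrow> gD n i (n + 1 - d) \<in> std_roots (Type_D (n + 4))"
proof (induction d)
  case 0
  then have "i \<le> n" by simp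
  then show ?case using g3 std_roots.reflect[OF D_genG_high[of i "n + 2" n], of "n + 1"] by simp
next
  case (Suc d)
  let ?j = "n + 1 - Suc d"
  have j: "i < ?j" "?j \<le> n" using Suc.prems by auto
  have "?j + 1 = n + 1 - d" using Suc.prems by simp
  then have "gD n i (?j + 1) \<in> std_roots (Type_D (n + 4))" using Suc.IH j by simp
  then show ?case using g4[OF j] std_roots.reflect[of "gD n i (?j + 1)" "Type_D (n + 4)" ?j] j by simp
qed

lemma D_genG: "i < j \<Longrightarrow> j \<le> n + 3 \<Longrightarrow> gD n i j \<in> std_roots (Type_D (n + 4))"
proof -
  assume h: "i < j" "j \<le> n + 3"
  show ?thesis
  proof (cases "n + 2 \<le> j")
    case True then show ?thesis using D_genG_high h by blast
  next
    case False
    then show ?thesis using D_genG_low[where i=i and d="n + 1 - j" and n=n] h by simp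
  qed
qed

lemma gD_inj:
  assumes "i < j" "j \<le> n + 3" "i' < j'" "j' \<le> n + 3" "gD n i j = gD n i' j'"
  shows "i = i' \<and> j = j'"
proof -
  have e: "gD n i j c = gD n i' j' c" for c using assms(5) by simp
  have "i = i'"
  proof (rule ccontr)
    assume "i \<noteq> i'"
    then consider "i < i'" | "i' < i" by linarith
    then show False
    proof cases
      case 1 then show False using e[of i] assms by (auto simp: gD_def split: if_splits)
    next
      case 2 then show False using e[of i'] assms by (auto simp: gD_def split: if_splits)
    qed
  qed
  moreover have "j = j'"
  proof (rule ccontr)
    assume "j \<noteq> j'"
    then consider "j < j'" | "j' < j" by linarith
    then show False
    proof cases
      case 1 then show False using e[of j] e[of "n + 2"] assms \<open>i = i'\<close> by (auto simp: gD_def split: if_splits)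
    next
      case 2 then show False using e[of j'] e[of "n + 2"] assms \<open>i = i'\<close> by (auto simp: gD_def split: if_splits)
    qed
  qed
  ultimately show ?thesis by simp
qed

lemma indA_inj:
  assumes "a \<le> b" "a' \<le> b'" "indA a b = indA a' b'"
  shows "a = a' \<and> b = b'"
proof -
  have "indA a b a = indA a' b' a" "indA a b a' = indA a' b' a'" "indA a b b = indA a' b' b" "indA a b b' = indA a' b' b'"
    using assms(3) by simp_all
  then show ?thesis using assms by (auto simp: indA_def split: if_splits)
qed

lemma card_pairs_lt: "card {(i, j). i < j \<and> j < (m::nat) + 1} = card {(a, b). a \<le> b \<and> b < m}"
proof -
  have "{(i, j). i < j \<and> j < m + 1} = (\<lambda>(a, b). (a, b + 1)) ` {(a, b). a \<le> b \<and> b < m}"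
  proof (intro equalityI subsetI)
    fix x assume "x \<in> {(i, j). i < j \<and> j < m + 1}"
    then obtain i j where x: "x = (i, j)" "i < j" "j < m + 1" by auto
    then have "(i, j - 1) \<in> {(a, b). a \<le> b \<and> b < m}" "x = (\<lambda>(a, b). (a, b + 1)) (i, j - 1)" by auto
    then show "x \<in> (\<lambda>(a, b). (a, b + 1)) ` {(a, b). a \<le> b \<and> b < m}" by blast
  qed auto
  moreover have "inj_on (\<lambda>(a, b). (a, b + 1)) {(a, b). a \<le> b \<and> b < (m::nat)}" by (auto simp: inj_on_def)
  ultimately show ?thesis by (simp add: card_image)
qed

lemma D_good: "4 \<le> m \<Longrightarrow> good_type (Type_D m)"
proof -
  assume "4 \<le> m"
  then obtain n where m: "m = n + 4" by (metis add.commute le_add_diff_inverse)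
  let ?T = "Type_D (n + 4)"
  let ?R = "RD n"
  have a: "\<forall>k<dynkin_rank ?T. unit_nat k \<in> ?R"
  proof (intro allI impI)
    fix k assume k: "k < dynkin_rank ?T"
    show "unit_nat k \<in> ?R"
    proof (cases "k = n + 3")
      case True then show ?thesis using g5[of n] RD_memG[of "n + 2" "n + 3" n] by simp
    next
      case False
      have "unit_nat k = indA k k" by (auto simp: indA_def unit_nat_def fun_eq_iff)
      then show ?thesis using False k RD_memA[of k k n] by simp
    qed
  qed
  have b: "\<forall>w\<in>?R. \<forall>k<dynkin_rank ?T. srefl ?T k w \<in> ?R \<union> negf ` ?R"
  proof (intro ballI allI impI)
    fix w k assume w: "w \<in> ?R" and k: "k < dynkin_rank ?T"
    then have k': "k < n + 4" by simp
    from w show "srefl ?T k w \<in> ?R \<union> negf ` ?R"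
      unfolding RD_def using D_closureA[OF _ _ k'] D_closureG[OF _ _ k'] unfolding RD_def by blast
  qed
  have c: "?R \<subseteq> std_roots ?T"
    unfolding RD_def using D_genA' D_genG by blast
  have d: "\<forall>w\<in>?R. (\<forall>c. 0 \<le> w c) \<and> (\<exists>c. w c \<noteq> 0)"
  proof
    fix w assume "w \<in> ?R"
    then consider a b where "w = indA a b" "a \<le> b" | i j where "w = gD n i j"
      unfolding RD_def by blast
    then show "(\<forall>c. 0 \<le> w c) \<and> (\<exists>c. w c \<noteq> 0)"
    proof cases
      case 1 then show ?thesis by (auto simp: indA_def intro!: exI[of _ a])
    next
      case 2 then show ?thesis by (auto simp: gD_def intro!: exI[of _ "n + 3"])
    qed
  qed
  note R = std_from_R[OF a b c d]
  define PA where "PA = {(a, b). a \<le> b \<and> b \<le> n + 2}"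
  define PG where "PG = {(i, j). i < j \<and> j \<le> n + 3}"
  have finPA: "finite PA" unfolding PA_def by (rule finite_subset[of _ "{0..<n+3} \<times> {0..<n+3}"]) auto
  have finPG: "finite PG" unfolding PG_def by (rule finite_subset[of _ "{0..<n+4} \<times> {0..<n+4}"]) auto
  have RA: "{indA a b | a b. a \<le> b \<and> b \<le> n + 2} = (\<lambda>(a, b). indA a b) ` PA" by (auto simp: PA_def)
  have RG: "{gD n i j | i j. i < j \<and> j \<le> n + 3} = (\<lambda>(i, j). gD n i j) ` PG" by (auto simp: PG_def)
  have injA: "inj_on (\<lambda>(a, b). indA a b) PA" by (auto simp: PA_def inj_on_def dest: indA_inj)
  have injG: "inj_on (\<lambda>(i, j). gD n i j) PG" by (auto simp: PG_def inj_on_def dest: gD_inj)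
  have disj: "(\<lambda>(a, b). indA a b) ` PA \<inter> (\<lambda>(i, j). gD n i j) ` PG = {}"
  proof -
    have "indA a b (n + 3) = 0" if "(a, b) \<in> PA" for a b using that by (auto simp: PA_def indA_def)
    moreover have "gD n i j (n + 3) = 1" for i j by (simp add: gD_def)
    ultimately show ?thesis by fastforce
  qed
  have cardR: "card ?R = card PA + card PG"
    unfolding RD_def RA RG
    by (subst card_Un_disjoint) (use finPA finPG disj in \<open>auto simp: card_image[OF injA] card_image[OF injG]\<close>)
  have PA': "PA = {(a, b). a \<le> b \<and> b < n + 3}" by (auto simp: PA_def)
  have PG': "PG = {(i, j). i < j \<and> j < n + 3 + 1}" by (auto simp: PG_def)
  have cPA: "card PA * 2 = (n + 3) * (n + 4)" using card_pairs[of "n + 3"] by (simp add: PA')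
  have cPG: "card PG = card PA" unfolding PG' PA' by (rule card_pairs_lt)
  have finR: "finite ?R" unfolding RD_def RA RG using finPA finPG by simp
  have S3: "\<forall>k. 0 < k \<and> k < dynkin_rank ?T \<longrightarrow> (\<exists>l<k. std_edge ?T l k)"
  proof (intro allI impI)
    fix k assume k: "0 < k \<and> k < dynkin_rank ?T"
    show "\<exists>l<k. std_edge ?T l k"
    proof (cases "k = n + 3")
      case True then show ?thesis by (intro exI[of _ "n + 1"]) (auto simp: std_edge_def)
    next
      case False then show ?thesis using k by (intro exI[of _ "k - 1"]) (auto simp: std_edge_def)
    qed
  qed
  have "good_type ?T"
    unfolding good_type_def using R finR cardR cPA cPG S3 by (auto simp: algebra_simps)
  then show ?thesis using m by simp
qed

theorem proposition3p8:
  fixes T :: dynkin_type and Q1 :: "('n::finite \<times> 'n) set" and z :: "'n \<Rightarrow> complex"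
  assumes "dynkin_quiver T Q1"
    and "\<forall>i. z i \<in> semi_closed_upper_half_plane"
  shows "complex_of_real (cat_volume Q1 z)
           = (\<Sum>i\<in>UNIV. \<Sum>j\<in>UNIV. complex_of_real (chi_inv Q1 i j) * z i * cnj (z j))
       \<and> (\<Sum>i\<in>UNIV. \<Sum>j\<in>UNIV. complex_of_real (chi_inv Q1 i j) * z i * cnj (z j))
           = complex_of_real (1 / real (coxeter_number T) *
               (\<Sum>M\<in>positive_roots Q1. (cmod (central_charge z M))\<^sup>2))
       \<and> (\<forall>i j. chi_inv Q1 i j = 1 / real (coxeter_number T) *
               (\<Sum>M\<in>positive_roots Q1. real_of_int (M $ i) * real_of_int (M $ j)))"
proof -
  have valid: "dynkin_valid T" using assms(1) by (simp add: dynkin_quiver_def)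
  have good: "good_type T"
  proof (cases T)
    case (Type_A m) then show ?thesis using valid A_good by simp
  next
    case (Type_D m) then show ?thesis using valid D_good by simp
  next
    case (Type_E m) then show ?thesis using valid E_good by simp
  qed
  show ?thesis by (rule prop_from_good[OF assms(1) good])
qed

end
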